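(* For each prime $p$ let $\Lambda_p:\mathbb{F}_p\to[0,1]$ be $\Lambda_p(m \bmod p)=m/p$ for $m\in\{0,\dots,p-1\}$. The continuous-logic theory of the class of structures $(\mathbb{F}_p,+,\cdot,\Lambda_p)$, $p$ prime, is undecidable.
   Context: Continuous logic (equality discrete, no metric): a basic relation such as $\Lambda$ takes values in a compact subset of $\mathbb{C}$ (here $[0,1]$); formulas are built by continuous connectives, $\sup$/$\inf$ quantifiers and uniform limits; a sentence $\psi$ has a value $\psi^A$ in each structure $A$, lying in a compact set $V_\psi$. The theory of a class $\mathcal{C}$ assigns to each sentence $\psi$ the closure of $\{\psi^A:A\in\mathcal{C}\}$. It is decidable if there is an algorithm which, given a sentence $\psi$ and $\epsilon>0$, outputs a finite set $S\subseteq V_\psi$ such that every value $\psi^A$ ($A$ a model of the theory) is within $\epsilon$ of $S$ and every point of $S$ is within $\epsilon$ of some such value. *)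

theory Defs
  imports "HOL-Analysis.Analysis" "HOL-Computational_Algebra.Primes" "HOL-Library.Nat_Bijection"
begin

datatype recf = Zr | Sc | Id nat | Cn recf "recf list" | Pr recf recf | Mn recf

inductive reval :: "recf \<Rightarrow> nat list \<Rightarrow> nat \<Rightarrow> bool" where
  zero: "reval Zr xs 0"
| succ: "reval Sc [x] (Suc x)"
| proj: "i < length xs \<Longrightarrow> reval (Id i) xs (xs ! i)"
| comp: "length ys = length fs \<Longrightarrow> (\<forall>i < length fs. reval (fs ! i) xs (ys ! i))
          \<Longrightarrow> reval g ys r \<Longrightarrow> reval (Cn g fs) xs r"
| prim0: "reval f xs r \<Longrightarrow> reval (Pr f g) (0 # xs) r"
| primS: "reval (Pr f g) (k # xs) r' \<Longrightarrow> reval g (k # r' # xs) r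
          \<Longrightarrow> reval (Pr f g) (Suc k # xs) r"
| mu: "reval f (k # xs) 0 \<Longrightarrow> (\<forall>j < k. \<exists>r. reval f (j # xs) r \<and> 0 < r)
          \<Longrightarrow> reval (Mn f) xs k"

definition computable :: "(nat \<Rightarrow> nat) \<Rightarrow> bool" where
  "computable f \<longleftrightarrow> (\<exists>c. \<forall>x. reval c [x] (f x))"

datatype tm = V nat | Add tm tm | Mul tm tm

text \<open>Connectives: 1 - x, x/2, truncated subtraction (a generating set dense in all
  continuous connectives on [0,1]); quantifiers sup and inf.\<close>
datatype fm = Eq tm tm | Lam tm | Neg fm | Half fm | Minus fm fm | Sup nat fm | Inf nat fm

primrec tvars :: "tm \<Rightarrow> nat set" where
  "tvars (V i) = {i}"
| "tvars (Add a b) = tvars a \<union> tvars b"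
| "tvars (Mul a b) = tvars a \<union> tvars b"

primrec fvars :: "fm \<Rightarrow> nat set" where
  "fvars (Eq s t) = tvars s \<union> tvars t"
| "fvars (Lam t) = tvars t"
| "fvars (Neg a) = fvars a"
| "fvars (Half a) = fvars a"
| "fvars (Minus a b) = fvars a \<union> fvars b"
| "fvars (Sup x a) = fvars a - {x}"
| "fvars (Inf x a) = fvars a - {x}"

definition sentence :: "fm \<Rightarrow> bool" where
  "sentence \<phi> \<longleftrightarrow> fvars \<phi> = {}"

text \<open>F_p is represented by {0..<p} with arithmetic mod p.\<close>
primrec tval :: "nat \<Rightarrow> (nat \<Rightarrow> nat) \<Rightarrow> tm \<Rightarrow> nat" where
  "tval p \<sigma> (V i) = \<sigma> i mod p"
| "tval p \<sigma> (Add a b) = (tval p \<sigma> a + tval p \<sigma> b) mod p"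
| "tval p \<sigma> (Mul a b) = (tval p \<sigma> a * tval p \<sigma> b) mod p"

definition Lambda :: "nat \<Rightarrow> nat \<Rightarrow> real" where
  "Lambda p m = real (m mod p) / real p"

primrec fval :: "nat \<Rightarrow> (nat \<Rightarrow> nat) \<Rightarrow> fm \<Rightarrow> real" where
  "fval p \<sigma> (Eq s t) = (if tval p \<sigma> s = tval p \<sigma> t then 0 else 1)"
| "fval p \<sigma> (Lam t) = Lambda p (tval p \<sigma> t)"
| "fval p \<sigma> (Neg a) = 1 - fval p \<sigma> a"
| "fval p \<sigma> (Half a) = fval p \<sigma> a / 2"
| "fval p \<sigma> (Minus a b) = max 0 (fval p \<sigma> a - fval p \<sigma> b)"
| "fval p \<sigma> (Sup x a) = Max ((\<lambda>m. fval p (\<sigma>(x := m)) a) ` {0..<p})"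
| "fval p \<sigma> (Inf x a) = Min ((\<lambda>m. fval p (\<sigma>(x := m)) a) ` {0..<p})"

text \<open>Theory of the class {(F_p,+,*,Lambda_p) : p prime}: closure of the value set.\<close>
definition Th_Fp :: "fm \<Rightarrow> real set" where
  "Th_Fp \<psi> = closure {fval p (\<lambda>_. 0) \<psi> | p. prime (p::nat)}"

primrec enc_tm :: "tm \<Rightarrow> nat" where
  "enc_tm (V i) = prod_encode (0, i)"
| "enc_tm (Add a b) = prod_encode (1, prod_encode (enc_tm a, enc_tm b))"
| "enc_tm (Mul a b) = prod_encode (2, prod_encode (enc_tm a, enc_tm b))"

primrec enc_fm :: "fm \<Rightarrow> nat" where
  "enc_fm (Eq s t) = prod_encode (0, prod_encode (enc_tm s, enc_tm t))"
| "enc_fm (Lam t) = prod_encode (1, enc_tm t)"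
| "enc_fm (Neg a) = prod_encode (2, enc_fm a)"
| "enc_fm (Half a) = prod_encode (3, enc_fm a)"
| "enc_fm (Minus a b) = prod_encode (4, prod_encode (enc_fm a, enc_fm b))"
| "enc_fm (Sup x a) = prod_encode (5, prod_encode (x, enc_fm a))"
| "enc_fm (Inf x a) = prod_encode (6, prod_encode (x, enc_fm a))"

definition out_set :: "nat \<Rightarrow> real set" where
  "out_set n = set (map (\<lambda>c. case prod_decode c of (a, b) \<Rightarrow> real a / real (Suc b)) (list_decode n))"

text \<open>Decidability: an algorithm which, on input (sentence psi, k) with eps = 1/(k+1),
  outputs a finite S contained in V_psi = [0,1] that is eps-Hausdorff-close to T(psi).\<close>
definition decidable_th :: "(fm \<Rightarrow> real set) \<Rightarrow> bool" where
  "decidable_th T \<longleftrightarrow> (\<exists>f. computable f \<and>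
     (\<forall>\<psi> k. sentence \<psi> \<longrightarrow>
        (let S = out_set (f (prod_encode (enc_fm \<psi>, k))); \<epsilon> = 1 / real (Suc k) in
          S \<subseteq> {0..1} \<and>
          (\<forall>v\<in>T \<psi>. \<exists>s\<in>S. dist v s \<le> \<epsilon>) \<and>
          (\<forall>s\<in>S. \<exists>v\<in>T \<psi>. dist s v \<le> \<epsilon>))))"

end

theory Submission
  imports Defs "HOL-Number_Theory.Number_Theory"
begin

definition bet :: "nat \<Rightarrow> nat \<Rightarrow> nat \<Rightarrow> nat" where
  "bet a b i = a mod (Suc (Suc i * b))"

lemma beta_coprime:
  assumes "i < j" "j \<le> M"
  shows "coprime (Suc (Suc i * fact M)) (Suc (Suc j * fact M))"
proof (rule ccontr)
  let ?b = "fact M :: nat"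
  assume "\<not> ?thesis"
  hence "gcd (Suc (Suc i * ?b)) (Suc (Suc j * ?b)) \<noteq> 1" using coprime_iff_gcd_eq_1 by blast
  then obtain q where q0: "prime q" "q dvd gcd (Suc (Suc i * ?b)) (Suc (Suc j * ?b))"
    using prime_factor_nat by blast
  hence q: "prime q" "q dvd Suc (Suc i * ?b)" "q dvd Suc (Suc j * ?b)" by auto
  hence "q dvd Suc (Suc j * ?b) - Suc (Suc i * ?b)" using dvd_diff_nat by blast
  moreover have "Suc (Suc j * ?b) - Suc (Suc i * ?b) = (j - i) * ?b"
    using assms by (simp add: diff_mult_distrib)
  ultimately have "q dvd (j - i) * ?b" by simp
  hence "q dvd (j - i) \<or> q dvd ?b" using q(1) prime_dvd_mult_iff by blast
  moreover have "(j - i) dvd ?b" using assms by (intro dvd_fact) auto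
  ultimately have "q dvd ?b" using dvd_trans by blast
  hence "q dvd Suc i * ?b" by simp
  with q(2) have "q dvd 1 + Suc i * ?b" "q dvd Suc i * ?b" by simp_all
  hence "q dvd 1" using dvd_add_right_iff by (metis add.commute)
  with q(1) show False by simp
qed

lemma beta_exists: "\<exists>a b. \<forall>k<length vs. bet a b k = vs ! k"
proof -
  define M where "M = Suc (length vs + sum_list vs)"
  define b where "b = (fact M :: nat)"
  define m where "m = (\<lambda>i. Suc (Suc i * b))"
  have cop: "\<forall>i\<in>{..<length vs}. \<forall>j\<in>{..<length vs}. i \<noteq> j \<longrightarrow> coprime (m i) (m j)"
  proof (intro ballI impI)
    fix i j assume ij: "i \<in> {..<length vs}" "j \<in> {..<length vs}" "i \<noteq> j"
    show "coprime (m i) (m j)"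
    proof (cases "i < j")
      case True thus ?thesis using ij unfolding m_def b_def M_def by (intro beta_coprime) auto
    next
      case False hence "j < i" using ij by auto
      thus ?thesis using ij unfolding m_def b_def M_def
        by (subst coprime_commute, intro beta_coprime) auto
    qed
  qed
  obtain x where x: "\<forall>i\<in>{..<length vs}. [x = vs ! i] (mod m i)"
    using chinese_remainder_nat[OF _ cop] by blast
  have "M \<le> b" unfolding b_def by (rule fact_ge_self)
  have "\<forall>k<length vs. bet x b k = vs ! k"
  proof (intro allI impI)
    fix k assume k: "k < length vs"
    have "vs ! k \<le> sum_list vs" using k by (simp add: elem_le_sum_list)
    hence "vs ! k < b" using \<open>M \<le> b\<close> unfolding M_def by simp
    moreover have "b \<le> Suc k * b" by simp
    ultimately have "vs ! k < m k" unfolding m_def by linarith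
    thus "bet x b k = vs ! k" using x k unfolding bet_def m_def cong_def by simp
  qed
  thus ?thesis by blast
qed

lemma beta_exists_fun: "\<exists>a b. \<forall>k<n. bet a b k = f k"
  using beta_exists[of "map f [0..<n]"] by auto


datatype af = AEq nat nat | ANe nat nat | AAdd nat nat nat | AMul nat nat nat
  | AAnd af af | AOr af af | AEx nat af | AAll nat nat af

primrec afv :: "af \<Rightarrow> nat set" where
  "afv (AEq a b) = {a, b}"
| "afv (ANe a b) = {a, b}"
| "afv (AAdd a b c) = {a, b, c}"
| "afv (AMul a b c) = {a, b, c}"
| "afv (AAnd A B) = afv A \<union> afv B"
| "afv (AOr A B) = afv A \<union> afv B"
| "afv (AEx x A) = afv A - {x}"
| "afv (AAll x y A) = insert y (afv A - {x})"

primrec hb :: "(nat \<Rightarrow> bool) \<Rightarrow> (nat \<Rightarrow> nat) \<Rightarrow> af \<Rightarrow> bool" where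
  "hb D \<sigma> (AEq a b) = (\<sigma> a = \<sigma> b)"
| "hb D \<sigma> (ANe a b) = (\<sigma> a \<noteq> \<sigma> b)"
| "hb D \<sigma> (AAdd a b c) = (\<sigma> a + \<sigma> b = \<sigma> c)"
| "hb D \<sigma> (AMul a b c) = (\<sigma> a * \<sigma> b = \<sigma> c)"
| "hb D \<sigma> (AAnd A B) = (hb D \<sigma> A \<and> hb D \<sigma> B)"
| "hb D \<sigma> (AOr A B) = (hb D \<sigma> A \<or> hb D \<sigma> B)"
| "hb D \<sigma> (AEx x A) = (\<exists>w. D w \<and> hb D (\<sigma>(x := w)) A)"
| "hb D \<sigma> (AAll x y A) = (\<forall>t. D t \<longrightarrow> t < \<sigma> y \<longrightarrow> hb D (\<sigma>(x := t)) A)"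

lemma hb_cong: "(\<forall>x\<in>afv A. \<sigma> x = \<sigma>' x) \<Longrightarrow> hb D \<sigma> A = hb D \<sigma>' A"
proof (induction A arbitrary: \<sigma> \<sigma>')
  case (AEx x A)
  have "\<And>w. hb D (\<sigma>(x := w)) A = hb D (\<sigma>'(x := w)) A"
    by (rule AEx.IH) (use AEx.prems in auto)
  thus ?case by simp
next
  case (AAll x y A)
  have "\<And>w. hb D (\<sigma>(x := w)) A = hb D (\<sigma>'(x := w)) A"
    by (rule AAll.IH) (use AAll.prems in auto)
  moreover have "\<sigma> y = \<sigma>' y" using AAll.prems by simp
  ultimately show ?case by simp
next
  case (AAnd A B)
  have "hb D \<sigma> A = hb D \<sigma>' A" by (rule AAnd.IH(1)) (use AAnd.prems in auto)
  moreover have "hb D \<sigma> B = hb D \<sigma>' B" by (rule AAnd.IH(2)) (use AAnd.prems in auto)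
  ultimately show ?case by simp
next
  case (AOr A B)
  have "hb D \<sigma> A = hb D \<sigma>' A" by (rule AOr.IH(1)) (use AOr.prems in auto)
  moreover have "hb D \<sigma> B = hb D \<sigma>' B" by (rule AOr.IH(2)) (use AOr.prems in auto)
  ultimately show ?case by simp
qed auto

lemma hb_down:
  "(\<forall>x\<in>afv A. \<sigma> x < p) \<Longrightarrow> hb (\<lambda>x. x < p) \<sigma> A \<Longrightarrow> hb (\<lambda>_. True) \<sigma> A"
proof (induction A arbitrary: \<sigma>)
  case (AEx x A)
  then obtain w where "w < p" "hb (\<lambda>x. x < p) (\<sigma>(x := w)) A" by auto
  moreover have "\<forall>z\<in>afv A. (\<sigma>(x := w)) z < p" using AEx.prems(1) \<open>w < p\<close> by auto
  ultimately have "hb (\<lambda>_. True) (\<sigma>(x := w)) A" using AEx.IH by blast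
  thus ?case by auto
next
  case (AAll x y A)
  have "\<sigma> y < p" using AAll.prems(1) by simp
  show ?case
  proof (simp, intro allI impI)
    fix t assume "t < \<sigma> y"
    hence "t < p" using \<open>\<sigma> y < p\<close> by simp
    hence "hb (\<lambda>x. x < p) (\<sigma>(x := t)) A" using AAll.prems(2) \<open>t < \<sigma> y\<close> by simp
    moreover have "\<forall>z\<in>afv A. (\<sigma>(x := t)) z < p" using AAll.prems(1) \<open>t < p\<close> by auto
    ultimately show "hb (\<lambda>_. True) (\<sigma>(x := t)) A" using AAll.IH by blast
  qed
qed auto

lemma hb_up:
  "hb (\<lambda>_. True) \<sigma> A \<Longrightarrow> \<exists>B. \<forall>p\<ge>B. (\<forall>x\<in>afv A. \<sigma> x < p) \<longrightarrow> hb (\<lambda>x. x < p) \<sigma> A"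
proof (induction A arbitrary: \<sigma>)
  case (AAnd A1 A2)
  have h: "hb (\<lambda>_. True) \<sigma> A1" "hb (\<lambda>_. True) \<sigma> A2" using AAnd.prems by auto
  obtain B1 where "\<forall>p\<ge>B1. (\<forall>x\<in>afv A1. \<sigma> x < p) \<longrightarrow> hb (\<lambda>x. x < p) \<sigma> A1"
    using AAnd.IH(1)[OF h(1)] by blast
  moreover obtain B2 where "\<forall>p\<ge>B2. (\<forall>x\<in>afv A2. \<sigma> x < p) \<longrightarrow> hb (\<lambda>x. x < p) \<sigma> A2"
    using AAnd.IH(2)[OF h(2)] by blast
  ultimately show ?case by (intro exI[of _ "max B1 B2"]) auto
next
  case (AOr A1 A2)
  thus ?case by (metis Un_iff afv.simps(6) hb.simps(6))
next
  case (AEx x A)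
  then obtain w where "hb (\<lambda>_. True) (\<sigma>(x := w)) A" by auto
  then obtain B where B: "\<forall>p\<ge>B. (\<forall>z\<in>afv A. (\<sigma>(x := w)) z < p) \<longrightarrow> hb (\<lambda>x. x < p) (\<sigma>(x := w)) A"
    using AEx.IH by blast
  show ?case
  proof (intro exI[of _ "max B (Suc w)"] allI impI)
    fix p assume "max B (Suc w) \<le> p" "\<forall>z\<in>afv (AEx x A). \<sigma> z < p"
    hence "hb (\<lambda>x. x < p) (\<sigma>(x := w)) A" using B by auto
    thus "hb (\<lambda>x. x < p) \<sigma> (AEx x A)" using \<open>max B (Suc w) \<le> p\<close> by (auto simp: Suc_le_eq)
  qed
next
  case (AAll x y A)
  have "\<forall>t. t < \<sigma> y \<longrightarrow> (\<exists>B. \<forall>p\<ge>B. (\<forall>z\<in>afv A. (\<sigma>(x := t)) z < p) \<longrightarrow> hb (\<lambda>x. x < p) (\<sigma>(x := t)) A)"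
    using AAll.IH AAll.prems by (simp del: fun_upd_apply)
  then obtain Bf where Bf: "\<forall>t. t < \<sigma> y \<longrightarrow> (\<forall>p\<ge>Bf t. (\<forall>z\<in>afv A. (\<sigma>(x := t)) z < p) \<longrightarrow> hb (\<lambda>x. x < p) (\<sigma>(x := t)) A)"
    by metis
  show ?case
  proof (intro exI[of _ "\<Sum>t<\<sigma> y. Bf t"] allI impI)
    fix p assume p: "(\<Sum>t<\<sigma> y. Bf t) \<le> p" "\<forall>z\<in>afv (AAll x y A). \<sigma> z < p"
    show "hb (\<lambda>x. x < p) \<sigma> (AAll x y A)"
    proof (simp, intro allI impI)
      fix t assume t: "t < p" "t < \<sigma> y"
      have "Bf t \<le> (\<Sum>t<\<sigma> y. Bf t)" using t by (intro member_le_sum) auto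
      moreover have "\<forall>z\<in>afv A. (\<sigma>(x := t)) z < p" using p(2) t by auto
      ultimately show "hb (\<lambda>x. x < p) (\<sigma>(x := t)) A" using Bf t p(1) by auto
    qed
  qed
qed auto

primrec okA :: "af \<Rightarrow> bool" where
  "okA (AEq a b) = True"
| "okA (ANe a b) = True"
| "okA (AAdd a b c) = True"
| "okA (AMul a b c) = True"
| "okA (AAnd A B) = (okA A \<and> okA B)"
| "okA (AOr A B) = (okA A \<and> okA B)"
| "okA (AEx x A) = okA A"
| "okA (AAll x y A) = (x \<noteq> y \<and> okA A)"

definition sig1 :: "nat \<Rightarrow> ((nat \<Rightarrow> nat) \<Rightarrow> bool) \<Rightarrow> bool" where
  "sig1 N R \<longleftrightarrow> (\<exists>A. okA A \<and> afv A \<subseteq> {..<N} \<and> (\<forall>\<sigma>. hb (\<lambda>_. True) \<sigma> A = R \<sigma>))"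

lemma sig1_cong: "sig1 N R \<Longrightarrow> (\<And>\<sigma>. R \<sigma> = R' \<sigma>) \<Longrightarrow> sig1 N R'"
  unfolding sig1_def by auto

lemma sig1_mono: "sig1 N R \<Longrightarrow> N \<le> M \<Longrightarrow> sig1 M R"
  unfolding sig1_def by (meson dual_order.trans lessThan_subset_iff)

lemma sig1_eq: "a < N \<Longrightarrow> b < N \<Longrightarrow> sig1 N (\<lambda>\<sigma>. \<sigma> a = \<sigma> b)"
  unfolding sig1_def by (intro exI[of _ "AEq a b"]) auto
lemma sig1_ne: "a < N \<Longrightarrow> b < N \<Longrightarrow> sig1 N (\<lambda>\<sigma>. \<sigma> a \<noteq> \<sigma> b)"
  unfolding sig1_def by (intro exI[of _ "ANe a b"]) auto
lemma sig1_add: "a < N \<Longrightarrow> b < N \<Longrightarrow> c < N \<Longrightarrow> sig1 N (\<lambda>\<sigma>. \<sigma> c = \<sigma> a + \<sigma> b)"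
  unfolding sig1_def by (intro exI[of _ "AAdd a b c"]) auto
lemma sig1_mul: "a < N \<Longrightarrow> b < N \<Longrightarrow> c < N \<Longrightarrow> sig1 N (\<lambda>\<sigma>. \<sigma> c = \<sigma> a * \<sigma> b)"
  unfolding sig1_def by (intro exI[of _ "AMul a b c"]) auto

lemma sig1_and: "sig1 N P \<Longrightarrow> sig1 N Q \<Longrightarrow> sig1 N (\<lambda>\<sigma>. P \<sigma> \<and> Q \<sigma>)"
  unfolding sig1_def by (elim exE conjE, rule_tac x="AAnd A Aa" in exI) auto
lemma sig1_or: "sig1 N P \<Longrightarrow> sig1 N Q \<Longrightarrow> sig1 N (\<lambda>\<sigma>. P \<sigma> \<or> Q \<sigma>)"
  unfolding sig1_def by (elim exE conjE, rule_tac x="AOr A Aa" in exI) auto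

lemma sig1_ex:
  assumes "sig1 (Suc N) (\<lambda>\<sigma>. P (\<sigma> N) \<sigma>)" "\<And>\<sigma> v w. P w (\<sigma>(N := v)) = P w \<sigma>"
  shows "sig1 N (\<lambda>\<sigma>. \<exists>w. P w \<sigma>)"
proof -
  obtain A where A: "afv A \<subseteq> {..<Suc N}" "\<And>\<sigma>. hb (\<lambda>_. True) \<sigma> A = P (\<sigma> N) \<sigma>" "okA A"
    using assms(1) unfolding sig1_def by blast
  have "afv (AEx N A) \<subseteq> {..<N}" "okA (AEx N A)" using A(1,3) by auto
  moreover have "hb (\<lambda>_. True) \<sigma> (AEx N A) = (\<exists>w. P w \<sigma>)" for \<sigma>
    using A(2) assms(2) by simp
  ultimately show ?thesis unfolding sig1_def by blast
qed

lemma sig1_all: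
  assumes "y < N" "sig1 (Suc N) (\<lambda>\<sigma>. P (\<sigma> N) \<sigma>)" "\<And>\<sigma> v w. P w (\<sigma>(N := v)) = P w \<sigma>"
  shows "sig1 N (\<lambda>\<sigma>. \<forall>t<\<sigma> y. P t \<sigma>)"
proof -
  obtain A where A: "afv A \<subseteq> {..<Suc N}" "\<And>\<sigma>. hb (\<lambda>_. True) \<sigma> A = P (\<sigma> N) \<sigma>" "okA A"
    using assms(2) unfolding sig1_def by blast
  have "afv (AAll N y A) \<subseteq> {..<N}" "okA (AAll N y A)" using A(1,3) assms(1) by auto
  moreover have "hb (\<lambda>_. True) \<sigma> (AAll N y A) = (\<forall>t<\<sigma> y. P t \<sigma>)" for \<sigma>
    using A(2) assms(3) by simp
  ultimately show ?thesis unfolding sig1_def by blast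
qed

primrec ren :: "(nat \<Rightarrow> nat) \<Rightarrow> af \<Rightarrow> af" where
  "ren g (AEq a b) = AEq (g a) (g b)"
| "ren g (ANe a b) = ANe (g a) (g b)"
| "ren g (AAdd a b c) = AAdd (g a) (g b) (g c)"
| "ren g (AMul a b c) = AMul (g a) (g b) (g c)"
| "ren g (AAnd A B) = AAnd (ren g A) (ren g B)"
| "ren g (AOr A B) = AOr (ren g A) (ren g B)"
| "ren g (AEx x A) = AEx (g x) (ren g A)"
| "ren g (AAll x y A) = AAll (g x) (g y) (ren g A)"

lemma ren_sem: "inj g \<Longrightarrow> hb D \<sigma> (ren g A) = hb D (\<sigma> \<circ> g) A"
proof (induction A arbitrary: \<sigma>)
  case (AEx x A)
  have eq: "\<And>w. (\<sigma>(g x := w)) \<circ> g = (\<sigma> \<circ> g)(x := w)"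
    using AEx.prems by (auto simp: fun_eq_iff inj_eq)
  have "hb D \<sigma> (ren g (AEx x A)) = (\<exists>w. D w \<and> hb D (\<sigma>(g x := w)) (ren g A))" by simp
  also have "\<dots> = (\<exists>w. D w \<and> hb D ((\<sigma> \<circ> g)(x := w)) A)"
    by (simp only: AEx.IH[OF AEx.prems] eq)
  finally show ?case by (simp add: comp_def)
next
  case (AAll x y A)
  have eq: "\<And>w. (\<sigma>(g x := w)) \<circ> g = (\<sigma> \<circ> g)(x := w)"
    using AAll.prems by (auto simp: fun_eq_iff inj_eq)
  have "hb D \<sigma> (ren g (AAll x y A)) = (\<forall>w. D w \<longrightarrow> w < \<sigma> (g y) \<longrightarrow> hb D (\<sigma>(g x := w)) (ren g A))" by simp
  also have "\<dots> = (\<forall>w. D w \<longrightarrow> w < (\<sigma> \<circ> g) y \<longrightarrow> hb D ((\<sigma> \<circ> g)(x := w)) A)"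
    by (simp only: AAll.IH[OF AAll.prems] eq comp_apply)
  finally show ?case by (simp add: comp_def)
qed auto

lemma ren_okA: "inj g \<Longrightarrow> okA (ren g A) = okA A"
  by (induction A) (auto simp: inj_eq)

lemma ren_afv: "inj g \<Longrightarrow> afv (ren g A) = g ` afv A"
  by (induction A) (auto simp: inj_eq image_set_diff)

primrec bnd :: "nat \<Rightarrow> (nat \<Rightarrow> nat) \<Rightarrow> nat \<Rightarrow> af \<Rightarrow> af" where
  "bnd 0 f N C = C"
| "bnd (Suc k) f N C = bnd k f N (AEx (N + k) (AAnd (AEq (N + k) (f k)) C))"

lemma bnd_okA: "okA C \<Longrightarrow> okA (bnd k f N C)"
  by (induction k arbitrary: C) auto

lemma bnd_sem:
  assumes "\<forall>j<k. f j < N"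
  shows "hb (\<lambda>_. True) \<sigma> (bnd k f N C) =
     hb (\<lambda>_. True) (\<lambda>x. if N \<le> x \<and> x < N + k then \<sigma> (f (x - N)) else \<sigma> x) C"
  using assms
proof (induction k arbitrary: C)
  case 0
  have "(\<lambda>x. if N \<le> x \<and> x < N + 0 then \<sigma> (f (x - N)) else \<sigma> x) = \<sigma>" by auto
  thus ?case by simp
next
  case (Suc k)
  let ?s = "\<lambda>x. if N \<le> x \<and> x < N + k then \<sigma> (f (x - N)) else \<sigma> x"
  let ?s' = "\<lambda>x. if N \<le> x \<and> x < N + Suc k then \<sigma> (f (x - N)) else \<sigma> x"
  have fk: "f k < N" using Suc.prems by simp
  have "hb (\<lambda>_. True) \<sigma> (bnd (Suc k) f N C) =
     hb (\<lambda>_. True) ?s (AEx (N + k) (AAnd (AEq (N + k) (f k)) C))"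
    using Suc by simp
  also have "\<dots> = hb (\<lambda>_. True) (?s(N + k := \<sigma> (f k))) C"
    using fk by auto
  also have "?s(N + k := \<sigma> (f k)) = ?s'" by (auto simp: fun_eq_iff)
  finally show ?case .
qed

lemma bnd_afv: "afv (bnd k f N C) \<subseteq> (afv C - {N..<N + k}) \<union> f ` {..<k}"
proof (induction k arbitrary: C)
  case (Suc k)
  show ?case
    by (simp only: bnd.simps) (rule order.trans[OF Suc.IH], auto)
qed simp

lemma sig1_ren:
  assumes "sig1 k R" "\<forall>j<k. f j < N"
  shows "sig1 N (\<lambda>\<sigma>. R (\<lambda>j. \<sigma> (f j)))"
proof -
  obtain A where A: "afv A \<subseteq> {..<k}" "\<And>\<sigma>. hb (\<lambda>_. True) \<sigma> A = R \<sigma>" "okA A"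
    using assms(1) unfolding sig1_def by blast
  define g where "g = (\<lambda>x::nat. x + N)"
  have ig: "inj g" unfolding g_def by (auto intro: injI)
  define B where "B = bnd k f N (ren g A)"
  have "afv (ren g A) \<subseteq> {N..<N + k}" using A(1) ren_afv[OF ig] unfolding g_def by auto
  hence "afv B \<subseteq> {..<N}" unfolding B_def using bnd_afv[of k f N "ren g A"] assms(2) by auto
  moreover have "okA B" unfolding B_def using A(3) ren_okA[OF ig] bnd_okA by simp
  moreover have "hb (\<lambda>_. True) \<sigma> B = R (\<lambda>j. \<sigma> (f j))" for \<sigma>
  proof -
    let ?s = "\<lambda>x. if N \<le> x \<and> x < N + k then \<sigma> (f (x - N)) else \<sigma> x"
    have "hb (\<lambda>_. True) \<sigma> B = hb (\<lambda>_. True) (?s \<circ> g) A"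
      unfolding B_def using bnd_sem[OF assms(2)] ren_sem[OF ig] by simp
    also have "\<dots> = hb (\<lambda>_. True) (\<lambda>j. \<sigma> (f j)) A"
      using A(1) by (intro hb_cong) (auto simp: g_def)
    finally show ?thesis using A(2) by simp
  qed
  ultimately show ?thesis unfolding sig1_def by blast
qed


lemma sig1_exF:
  "(\<And>\<sigma> v w. P w (\<sigma>(N := v)) = P w \<sigma>) \<Longrightarrow> sig1 (Suc N) (\<lambda>\<sigma>. P (\<sigma> N) \<sigma>) \<Longrightarrow> sig1 N (\<lambda>\<sigma>. \<exists>w. P w \<sigma>)"
  using sig1_ex by blast

lemma sig1_allF:
  "(\<And>\<sigma> v w. P w (\<sigma>(N := v)) = P w \<sigma>) \<Longrightarrow> y < N \<Longrightarrow> sig1 (Suc N) (\<lambda>\<sigma>. P (\<sigma> N) \<sigma>) \<Longrightarrow> sig1 N (\<lambda>\<sigma>. \<forall>t<\<sigma> y. P t \<sigma>)"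
  using sig1_all by blast

lemma inst1:
  assumes "sig1 1 (\<lambda>\<sigma>. R (\<sigma> 0))"
  shows "a < N \<Longrightarrow> sig1 N (\<lambda>\<sigma>. R (\<sigma> a))"
proof -
  assume "a < N"
  hence "\<forall>jj<1. [a] ! jj < N" by (auto simp: less_Suc_eq numeral_eq_Suc)
  from sig1_ren[OF assms this] show ?thesis by (rule sig1_cong) simp
qed

lemma inst2:
  assumes "sig1 2 (\<lambda>\<sigma>. R (\<sigma> 0) (\<sigma> 1))"
  shows "a < N \<Longrightarrow> b < N \<Longrightarrow> sig1 N (\<lambda>\<sigma>. R (\<sigma> a) (\<sigma> b))"
proof -
  assume "a < N" "b < N"
  hence "\<forall>jj<2. [a,b] ! jj < N" by (auto simp: less_Suc_eq numeral_eq_Suc)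
  from sig1_ren[OF assms this] show ?thesis by (rule sig1_cong) simp
qed

lemma inst3:
  assumes "sig1 3 (\<lambda>\<sigma>. R (\<sigma> 0) (\<sigma> 1) (\<sigma> 2))"
  shows "a < N \<Longrightarrow> b < N \<Longrightarrow> c < N \<Longrightarrow> sig1 N (\<lambda>\<sigma>. R (\<sigma> a) (\<sigma> b) (\<sigma> c))"
proof -
  assume "a < N" "b < N" "c < N"
  hence "\<forall>jj<3. [a,b,c] ! jj < N" by (auto simp: less_Suc_eq numeral_eq_Suc)
  from sig1_ren[OF assms this] show ?thesis by (rule sig1_cong) simp
qed

lemma inst4:
  assumes "sig1 4 (\<lambda>\<sigma>. R (\<sigma> 0) (\<sigma> 1) (\<sigma> 2) (\<sigma> 3))"
  shows "a < N \<Longrightarrow> b < N \<Longrightarrow> c < N \<Longrightarrow> d < N \<Longrightarrow> sig1 N (\<lambda>\<sigma>. R (\<sigma> a) (\<sigma> b) (\<sigma> c) (\<sigma> d))"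
proof -
  assume "a < N" "b < N" "c < N" "d < N"
  hence "\<forall>jj<4. [a,b,c,d] ! jj < N" by (auto simp: less_Suc_eq numeral_eq_Suc)
  from sig1_ren[OF assms this] show ?thesis by (rule sig1_cong) simp
qed

lemma inst5:
  assumes "sig1 5 (\<lambda>\<sigma>. R (\<sigma> 0) (\<sigma> 1) (\<sigma> 2) (\<sigma> 3) (\<sigma> 4))"
  shows "a < N \<Longrightarrow> b < N \<Longrightarrow> c < N \<Longrightarrow> d < N \<Longrightarrow> e < N \<Longrightarrow> sig1 N (\<lambda>\<sigma>. R (\<sigma> a) (\<sigma> b) (\<sigma> c) (\<sigma> d) (\<sigma> e))"
proof -
  assume "a < N" "b < N" "c < N" "d < N" "e < N"
  hence "\<forall>jj<5. [a,b,c,d,e] ! jj < N" by (auto simp: less_Suc_eq numeral_eq_Suc)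
  from sig1_ren[OF assms this] show ?thesis by (rule sig1_cong) simp
qed

lemma inst6:
  assumes "sig1 6 (\<lambda>\<sigma>. R (\<sigma> 0) (\<sigma> 1) (\<sigma> 2) (\<sigma> 3) (\<sigma> 4) (\<sigma> 5))"
  shows "a < N \<Longrightarrow> b < N \<Longrightarrow> c < N \<Longrightarrow> d < N \<Longrightarrow> e < N \<Longrightarrow> f < N \<Longrightarrow> sig1 N (\<lambda>\<sigma>. R (\<sigma> a) (\<sigma> b) (\<sigma> c) (\<sigma> d) (\<sigma> e) (\<sigma> f))"
proof -
  assume "a < N" "b < N" "c < N" "d < N" "e < N" "f < N"
  hence "\<forall>jj<6. [a,b,c,d,e,f] ! jj < N" by (auto simp: less_Suc_eq numeral_eq_Suc)
  from sig1_ren[OF assms this] show ?thesis by (rule sig1_cong) simp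
qed

lemma inst7:
  assumes "sig1 7 (\<lambda>\<sigma>. R (\<sigma> 0) (\<sigma> 1) (\<sigma> 2) (\<sigma> 3) (\<sigma> 4) (\<sigma> 5) (\<sigma> 6))"
  shows "a < N \<Longrightarrow> b < N \<Longrightarrow> c < N \<Longrightarrow> d < N \<Longrightarrow> e < N \<Longrightarrow> f < N \<Longrightarrow> g < N \<Longrightarrow> sig1 N (\<lambda>\<sigma>. R (\<sigma> a) (\<sigma> b) (\<sigma> c) (\<sigma> d) (\<sigma> e) (\<sigma> f) (\<sigma> g))"
proof -
  assume "a < N" "b < N" "c < N" "d < N" "e < N" "f < N" "g < N"
  hence "\<forall>jj<7. [a,b,c,d,e,f,g] ! jj < N" by (auto simp: less_Suc_eq numeral_eq_Suc)
  from sig1_ren[OF assms this] show ?thesis by (rule sig1_cong) simp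
qed

lemma inst8:
  assumes "sig1 8 (\<lambda>\<sigma>. R (\<sigma> 0) (\<sigma> 1) (\<sigma> 2) (\<sigma> 3) (\<sigma> 4) (\<sigma> 5) (\<sigma> 6) (\<sigma> 7))"
  shows "a < N \<Longrightarrow> b < N \<Longrightarrow> c < N \<Longrightarrow> d < N \<Longrightarrow> e < N \<Longrightarrow> f < N \<Longrightarrow> g < N \<Longrightarrow> h < N \<Longrightarrow> sig1 N (\<lambda>\<sigma>. R (\<sigma> a) (\<sigma> b) (\<sigma> c) (\<sigma> d) (\<sigma> e) (\<sigma> f) (\<sigma> g) (\<sigma> h))"
proof -
  assume "a < N" "b < N" "c < N" "d < N" "e < N" "f < N" "g < N" "h < N"
  hence "\<forall>jj<8. [a,b,c,d,e,f,g,h] ! jj < N" by (auto simp: less_Suc_eq numeral_eq_Suc)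
  from sig1_ren[OF assms this] show ?thesis by (rule sig1_cong) simp
qed

lemma inst9:
  assumes "sig1 9 (\<lambda>\<sigma>. R (\<sigma> 0) (\<sigma> 1) (\<sigma> 2) (\<sigma> 3) (\<sigma> 4) (\<sigma> 5) (\<sigma> 6) (\<sigma> 7) (\<sigma> 8))"
  shows "a < N \<Longrightarrow> b < N \<Longrightarrow> c < N \<Longrightarrow> d < N \<Longrightarrow> e < N \<Longrightarrow> f < N \<Longrightarrow> g < N \<Longrightarrow> h < N \<Longrightarrow> i < N \<Longrightarrow> sig1 N (\<lambda>\<sigma>. R (\<sigma> a) (\<sigma> b) (\<sigma> c) (\<sigma> d) (\<sigma> e) (\<sigma> f) (\<sigma> g) (\<sigma> h) (\<sigma> i))"
proof -
  assume "a < N" "b < N" "c < N" "d < N" "e < N" "f < N" "g < N" "h < N" "i < N"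
  hence "\<forall>jj<9. [a,b,c,d,e,f,g,h,i] ! jj < N" by (auto simp: less_Suc_eq numeral_eq_Suc)
  from sig1_ren[OF assms this] show ?thesis by (rule sig1_cong) simp
qed

lemma inst10:
  assumes "sig1 10 (\<lambda>\<sigma>. R (\<sigma> 0) (\<sigma> 1) (\<sigma> 2) (\<sigma> 3) (\<sigma> 4) (\<sigma> 5) (\<sigma> 6) (\<sigma> 7) (\<sigma> 8) (\<sigma> 9))"
  shows "a < N \<Longrightarrow> b < N \<Longrightarrow> c < N \<Longrightarrow> d < N \<Longrightarrow> e < N \<Longrightarrow> f < N \<Longrightarrow> g < N \<Longrightarrow> h < N \<Longrightarrow> i < N \<Longrightarrow> j < N \<Longrightarrow> sig1 N (\<lambda>\<sigma>. R (\<sigma> a) (\<sigma> b) (\<sigma> c) (\<sigma> d) (\<sigma> e) (\<sigma> f) (\<sigma> g) (\<sigma> h) (\<sigma> i) (\<sigma> j))"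
proof -
  assume "a < N" "b < N" "c < N" "d < N" "e < N" "f < N" "g < N" "h < N" "i < N" "j < N"
  hence "\<forall>jj<10. [a,b,c,d,e,f,g,h,i,j] ! jj < N" by (auto simp: less_Suc_eq numeral_eq_Suc)
  from sig1_ren[OF assms this] show ?thesis by (rule sig1_cong) simp
qed

named_theorems sigI

declare sig1_eq[sigI] sig1_ne[sigI] sig1_add[sigI] sig1_mul[sigI]


lemma zero_c: "sig1 1 (\<lambda>\<sigma>. \<sigma> 0 = 0)"
proof -
  have "sig1 1 (\<lambda>\<sigma>. \<sigma> 0 = \<sigma> 0 + \<sigma> 0)" by (((rule sig1_exF, simp) | (rule sig1_allF, simp, simp) | rule sig1_and | rule sig1_or | (rule sigI; simp))+)
  thus ?thesis by (rule sig1_cong) auto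
qed
lemmas sig1_zero[sigI] = inst1[OF zero_c]

lemma one_c: "sig1 1 (\<lambda>\<sigma>. \<sigma> 0 = 1)"
proof -
  have "sig1 1 (\<lambda>\<sigma>. \<sigma> 0 = \<sigma> 0 * \<sigma> 0 \<and> (\<exists>z. z = 0 \<and> \<sigma> 0 \<noteq> z))" by (((rule sig1_exF, simp) | (rule sig1_allF, simp, simp) | rule sig1_and | rule sig1_or | (rule sigI; simp))+)
  moreover have "(x = x * x \<and> (\<exists>z. z = 0 \<and> x \<noteq> z)) = (x = 1)" for x :: nat by (cases x) auto
  ultimately show ?thesis by (rule sig1_cong)
qed
lemmas sig1_one[sigI] = inst1[OF one_c]

lemma suc_c: "sig1 2 (\<lambda>\<sigma>. \<sigma> 0 = Suc (\<sigma> 1))"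
proof -
  have "sig1 2 (\<lambda>\<sigma>. \<exists>e. e = 1 \<and> \<sigma> 0 = \<sigma> 1 + e)" by (((rule sig1_exF, simp) | (rule sig1_allF, simp, simp) | rule sig1_and | rule sig1_or | (rule sigI; simp))+)
  thus ?thesis by (rule sig1_cong) auto
qed
lemmas sig1_suc[sigI] = inst2[OF suc_c]

lemma const_c: "sig1 1 (\<lambda>\<sigma>. \<sigma> 0 = k)"
proof (induction k)
  case 0 show ?case by (rule zero_c)
next
  case (Suc k)
  have "sig1 1 (\<lambda>\<sigma>. \<exists>w. w = k \<and> \<sigma> 0 = Suc w)"
    by (((rule sig1_exF, simp) | (rule sig1_allF, simp, simp) | rule sig1_and | rule sig1_or | (rule sigI; simp) | (rule inst1[OF Suc.IH]; simp))+)
  thus ?case by (rule sig1_cong) auto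
qed
lemmas sig1_const = inst1[OF const_c]

lemma lt_c: "sig1 2 (\<lambda>\<sigma>. \<sigma> 0 < \<sigma> 1)"
proof -
  have "sig1 2 (\<lambda>\<sigma>. \<exists>z. \<sigma> 1 = \<sigma> 0 + z \<and> (\<exists>zz. zz = 0 \<and> z \<noteq> zz))" by (((rule sig1_exF, simp) | (rule sig1_allF, simp, simp) | rule sig1_and | rule sig1_or | (rule sigI; simp))+)
  thus ?thesis by (rule sig1_cong) (auto, presburger)
qed
lemmas sig1_lt[sigI] = inst2[OF lt_c]

lemma pe_c: "sig1 3 (\<lambda>\<sigma>. \<sigma> 0 = prod_encode (\<sigma> 1, \<sigma> 2))"
proof -
  have "sig1 3 (\<lambda>\<sigma>. \<exists>s. s = \<sigma> 1 + \<sigma> 2 \<and> (\<exists>s1. s1 = Suc s \<and> (\<exists>t. t = s * s1 \<and>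
      (\<exists>u. u = t + \<sigma> 1 \<and> (\<exists>u2. u2 = u + \<sigma> 1 \<and> u2 = \<sigma> 0 + \<sigma> 0)))))" by (((rule sig1_exF, simp) | (rule sig1_allF, simp, simp) | rule sig1_and | rule sig1_or | (rule sigI; simp))+)
  moreover have "(\<exists>s. s = a + b \<and> (\<exists>s1. s1 = Suc s \<and> (\<exists>t. t = s * s1 \<and>
      (\<exists>u. u = t + a \<and> (\<exists>u2. u2 = u + a \<and> u2 = z + z))))) = (z = prod_encode (a, b))" for a b z :: nat
  proof -
    have "2 * triangle (a + b) = (a + b) * Suc (a + b)" unfolding triangle_def by simp
    thus ?thesis unfolding prod_encode_def by auto
  qed
  ultimately show ?thesis by (rule sig1_cong) 
qed
lemmas sig1_pe[sigI] = inst3[OF pe_c]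

definition cons :: "nat \<Rightarrow> nat \<Rightarrow> nat" where "cons a l = Suc (prod_encode (a, l))"

lemma list_decode_cons[simp]: "list_decode (cons a l) = a # list_decode l"
  unfolding cons_def by simp

lemma cons_c: "sig1 3 (\<lambda>\<sigma>. \<sigma> 0 = cons (\<sigma> 1) (\<sigma> 2))"
proof -
  have "sig1 3 (\<lambda>\<sigma>. \<exists>w. w = prod_encode (\<sigma> 1, \<sigma> 2) \<and> \<sigma> 0 = Suc w)" by (((rule sig1_exF, simp) | (rule sig1_allF, simp, simp) | rule sig1_and | rule sig1_or | (rule sigI; simp))+)
  thus ?thesis by (rule sig1_cong) (auto simp: cons_def)
qed
lemmas sig1_cons[sigI] = inst3[OF cons_c]

lemma bet_c: "sig1 4 (\<lambda>\<sigma>. \<sigma> 0 = bet (\<sigma> 1) (\<sigma> 2) (\<sigma> 3))"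
proof -
  have "sig1 4 (\<lambda>\<sigma>. \<exists>i1. i1 = Suc (\<sigma> 3) \<and> (\<exists>m0. m0 = i1 * \<sigma> 2 \<and> (\<exists>m. m = Suc m0 \<and>
      (\<exists>q. \<exists>qm. qm = q * m \<and> \<sigma> 1 = qm + \<sigma> 0 \<and> \<sigma> 0 < m))))" by (((rule sig1_exF, simp) | (rule sig1_allF, simp, simp) | rule sig1_and | rule sig1_or | (rule sigI; simp))+)
  moreover have "(\<exists>i1. i1 = Suc i \<and> (\<exists>m0. m0 = i1 * b \<and> (\<exists>m. m = Suc m0 \<and>
      (\<exists>q. \<exists>qm. qm = q * m \<and> a = qm + v \<and> v < m)))) = (v = bet a b i)" for a b i v :: nat
  proof
    assume "v = bet a b i"
    thus "\<exists>i1. i1 = Suc i \<and> (\<exists>m0. m0 = i1 * b \<and> (\<exists>m. m = Suc m0 \<and>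
      (\<exists>q. \<exists>qm. qm = q * m \<and> a = qm + v \<and> v < m)))"
      unfolding bet_def using div_mult_mod_eq[of a "Suc (Suc i * b)"] by (metis mod_less_divisor zero_less_Suc)
  next
    assume "\<exists>i1. i1 = Suc i \<and> (\<exists>m0. m0 = i1 * b \<and> (\<exists>m. m = Suc m0 \<and>
      (\<exists>q. \<exists>qm. qm = q * m \<and> a = qm + v \<and> v < m)))"
    then obtain q where "a = q * Suc (Suc i * b) + v" "v < Suc (Suc i * b)" by auto
    thus "v = bet a b i" unfolding bet_def
      using mod_mult_self3[of q "Suc (Suc i * b)" v] mod_less[of v "Suc (Suc i * b)"] by simp
  qed
  ultimately show ?thesis by (rule sig1_cong)
qed
lemmas sig1_bet[sigI] = inst4[OF bet_c]


definition nthr :: "nat \<Rightarrow> nat \<Rightarrow> nat \<Rightarrow> bool" where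
  "nthr l j v \<longleftrightarrow> j < length (list_decode l) \<and> list_decode l ! j = v"
definition lenr :: "nat \<Rightarrow> nat \<Rightarrow> bool" where
  "lenr l n \<longleftrightarrow> length (list_decode l) = n"

definition jC :: "(nat \<Rightarrow> nat \<Rightarrow> nat \<Rightarrow> bool) \<Rightarrow> nat \<Rightarrow> nat \<Rightarrow> nat \<Rightarrow> bool" where
  "jC Oc c x r \<longleftrightarrow> (\<exists>g fl yl L. c = prod_encode (3, prod_encode (g, fl)) \<and> lenr fl L \<and> lenr yl L \<and>
        (\<forall>j<L. \<exists>u w. nthr fl j u \<and> nthr yl j w \<and> Oc u x w) \<and> Oc g yl r)"
definition jP :: "(nat \<Rightarrow> nat \<Rightarrow> nat \<Rightarrow> bool) \<Rightarrow> nat \<Rightarrow> nat \<Rightarrow> nat \<Rightarrow> bool" where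
  "jP Oc c x r \<longleftrightarrow> (\<exists>f g. c = prod_encode (4, prod_encode (f, g)) \<and>
        ((\<exists>x'. x = cons 0 x' \<and> Oc f x' r) \<or>
         (\<exists>n x' r'. x = cons (Suc n) x' \<and> Oc c (cons n x') r' \<and> Oc g (cons n (cons r' x')) r)))"
definition jM :: "(nat \<Rightarrow> nat \<Rightarrow> nat \<Rightarrow> bool) \<Rightarrow> nat \<Rightarrow> nat \<Rightarrow> nat \<Rightarrow> bool" where
  "jM Oc c x r \<longleftrightarrow> (\<exists>f. c = prod_encode (5, f) \<and> Oc f (cons r x) 0 \<and> (\<forall>j<r. \<exists>r'. 0 < r' \<and> Oc f (cons j x) r'))"

definition justJ :: "(nat \<Rightarrow> nat \<Rightarrow> nat \<Rightarrow> bool) \<Rightarrow> nat \<Rightarrow> nat \<Rightarrow> nat \<Rightarrow> bool" where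
  "justJ Oc c x r \<longleftrightarrow>
     (c = prod_encode (0, 0) \<and> r = 0)
   \<or> (c = prod_encode (1, 0) \<and> (\<exists>y. x = cons y 0 \<and> r = Suc y))
   \<or> (\<exists>j. c = prod_encode (2, j) \<and> nthr x j r)
   \<or> jC Oc c x r \<or> jP Oc c x r \<or> jM Oc c x r"

lemma jC_mono:
  assumes "jC Oc c x r" "\<And>c x r. Oc c x r \<Longrightarrow> Oc' c x r"
  shows "jC Oc' c x r"
proof -
  obtain g fl yl L where h: "c = prod_encode (3, prod_encode (g, fl))" "lenr fl L" "lenr yl L"
     "\<forall>j<L. \<exists>u w. nthr fl j u \<and> nthr yl j w \<and> Oc u x w" "Oc g yl r"
    using assms(1) unfolding jC_def by blast
  have "\<forall>j<L. \<exists>u w. nthr fl j u \<and> nthr yl j w \<and> Oc' u x w"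
  proof (intro allI impI)
    fix j assume "j < L"
    then obtain u w where "nthr fl j u" "nthr yl j w" "Oc u x w" using h(4) by blast
    thus "\<exists>u w. nthr fl j u \<and> nthr yl j w \<and> Oc' u x w" using assms(2) by blast
  qed
  thus ?thesis unfolding jC_def using h assms(2) by blast
qed

lemma jP_mono:
  assumes "jP Oc c x r" "\<And>c x r. Oc c x r \<Longrightarrow> Oc' c x r"
  shows "jP Oc' c x r"
proof -
  obtain f g where h: "c = prod_encode (4, prod_encode (f, g))"
    "(\<exists>x'. x = cons 0 x' \<and> Oc f x' r) \<or>
         (\<exists>n x' r'. x = cons (Suc n) x' \<and> Oc c (cons n x') r' \<and> Oc g (cons n (cons r' x')) r)"
    using assms(1) unfolding jP_def by blast
  from h(2) show ?thesis
  proof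
    assume "\<exists>x'. x = cons 0 x' \<and> Oc f x' r"
    then obtain x' where "x = cons 0 x'" "Oc f x' r" by blast
    thus ?thesis unfolding jP_def using h(1) assms(2) by blast
  next
    assume "\<exists>n x' r'. x = cons (Suc n) x' \<and> Oc c (cons n x') r' \<and> Oc g (cons n (cons r' x')) r"
    then obtain n x' r' where "x = cons (Suc n) x'" "Oc c (cons n x') r'" "Oc g (cons n (cons r' x')) r" by blast
    hence "x = cons (Suc n) x'" "Oc' c (cons n x') r'" "Oc' g (cons n (cons r' x')) r" using assms(2) by auto
    thus ?thesis unfolding jP_def using h(1) by blast
  qed
qed

lemma jM_mono:
  assumes "jM Oc c x r" "\<And>c x r. Oc c x r \<Longrightarrow> Oc' c x r"
  shows "jM Oc' c x r"
proof -
  obtain f where h: "c = prod_encode (5, f)" "Oc f (cons r x) 0" "\<forall>j<r. \<exists>r'. 0 < r' \<and> Oc f (cons j x) r'"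
    using assms(1) unfolding jM_def by blast
  have "\<forall>j<r. \<exists>r'. 0 < r' \<and> Oc' f (cons j x) r'"
  proof (intro allI impI)
    fix j assume "j < r"
    then obtain r' where "0 < r'" "Oc f (cons j x) r'" using h(3) by blast
    thus "\<exists>r'. 0 < r' \<and> Oc' f (cons j x) r'" using assms(2) by blast
  qed
  thus ?thesis unfolding jM_def using h assms(2) by blast
qed

lemma justJ_mono:
  assumes "justJ Oc c x r" "\<And>c x r. Oc c x r \<Longrightarrow> Oc' c x r"
  shows "justJ Oc' c x r"
proof -
  have "jC Oc c x r \<Longrightarrow> jC Oc' c x r" "jP Oc c x r \<Longrightarrow> jP Oc' c x r" "jM Oc c x r \<Longrightarrow> jM Oc' c x r"
    using jC_mono jP_mono jM_mono assms(2) by blast+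
  thus ?thesis using assms(1) unfolding justJ_def by argo
qed

primrec code :: "recf \<Rightarrow> nat" where
  "code Zr = prod_encode (0, 0)"
| "code Sc = prod_encode (1, 0)"
| "code (Id i) = prod_encode (2, i)"
| "code (Cn g fs) = prod_encode (3, prod_encode (code g, list_encode (map code fs)))"
| "code (Pr f g) = prod_encode (4, prod_encode (code f, code g))"
| "code (Mn f) = prod_encode (5, code f)"

definition occ :: "(nat \<Rightarrow> nat \<times> nat \<times> nat) \<Rightarrow> nat \<Rightarrow> nat \<Rightarrow> nat \<Rightarrow> nat \<Rightarrow> bool" where
  "occ s i c x r \<longleftrightarrow> (\<exists>k<i. s k = (c, x, r))"

definition validS :: "(nat \<Rightarrow> nat \<times> nat \<times> nat) \<Rightarrow> nat \<Rightarrow> bool" where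
  "validS s m \<longleftrightarrow> (\<forall>i<m. justJ (occ s i) (fst (s i)) (fst (snd (s i))) (snd (snd (s i))))"

lemma cert_sound:
  assumes "validS s m"
  shows "i < m \<Longrightarrow> s i = (code C, x, r) \<Longrightarrow> reval C (list_decode x) r"
proof (induction i arbitrary: C x r rule: less_induct)
  case (less i)
  have IH: "\<And>k C x r. k < i \<Longrightarrow> s k = (code C, x, r) \<Longrightarrow> reval C (list_decode x) r"
    using less.IH less.prems(1) by auto
  have IO: "\<And>C x r. occ s i (code C) x r \<Longrightarrow> reval C (list_decode x) r"
    unfolding occ_def using IH by blast
  have J: "justJ (occ s i) (code C) x r" using assms less.prems unfolding validS_def by force
  show ?case using J unfolding justJ_def jC_def jP_def jM_def
  proof (elim disjE exE conjE)
    assume "code C = prod_encode (0, 0)" "r = 0"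
    thus ?thesis by (cases C) (auto intro: reval.zero)
  next
    fix y assume "code C = prod_encode (1, 0)" "x = cons y 0" "r = Suc y"
    thus ?thesis by (cases C) (auto intro: reval.succ)
  next
    fix j assume "code C = prod_encode (2, j)" "nthr x j r"
    thus ?thesis by (cases C) (auto simp: nthr_def intro: reval.proj)
  next
    fix g fl yl L
    assume h: "code C = prod_encode (3, prod_encode (g, fl))" "lenr fl L" "lenr yl L"
      "\<forall>j<L. \<exists>u w. nthr fl j u \<and> nthr yl j w \<and> occ s i u x w" "occ s i g yl r"
    then obtain G FS where C: "C = Cn G FS" "g = code G" "fl = list_encode (map code FS)"
      by (cases C) auto
    have len: "length FS = L" "length (list_decode yl) = L" using h(2,3) C(3) by (auto simp: lenr_def)
    have "\<forall>j<length FS. reval (FS ! j) (list_decode x) (list_decode yl ! j)"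
    proof (intro allI impI)
      fix j assume "j < length FS"
      then obtain u w where "nthr fl j u" "nthr yl j w" "occ s i u x w" using h(4) len by auto
      moreover have "u = code (FS ! j)" using \<open>nthr fl j u\<close> C(3) \<open>j < length FS\<close>
        by (simp add: nthr_def)
      ultimately show "reval (FS ! j) (list_decode x) (list_decode yl ! j)"
        using IO by (auto simp: nthr_def)
    qed
    moreover have "reval G (list_decode yl) r" using IO h(5) C(2) by simp
    ultimately show ?thesis using C(1) len by (auto intro: reval.comp)
  next
    fix f g x' assume h: "code C = prod_encode (4, prod_encode (f, g))" "x = cons 0 x'" "occ s i f x' r"
    then obtain F G where C: "C = Pr F G" "f = code F" "g = code G" by (cases C) auto
    thus ?thesis using h IO by (auto intro: reval.prim0)
  next
    fix f g n x' r' assume h: "code C = prod_encode (4, prod_encode (f, g))" "x = cons (Suc n) x'"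
      "occ s i (code C) (cons n x') r'" "occ s i g (cons n (cons r' x')) r"
    then obtain F G where C: "C = Pr F G" "f = code F" "g = code G" by (cases C) auto
    have "reval (Pr F G) (n # list_decode x') r'" using IO[OF h(3)] C by simp
    moreover have "reval G (n # r' # list_decode x') r" using IO h(4) C by fastforce
    ultimately show ?thesis using h(2) C by (auto intro: reval.primS)
  next
    fix f assume h: "code C = prod_encode (5, f)" "occ s i f (cons r x) 0"
      "\<forall>j<r. \<exists>r'. 0 < r' \<and> occ s i f (cons j x) r'"
    then obtain F where C: "C = Mn F" "f = code F" by (cases C) auto
    have "reval F (r # list_decode x) 0" using IO h(2) C by fastforce
    moreover have "\<forall>j<r. \<exists>r'. reval F (j # list_decode x) r' \<and> 0 < r'"
      using IO h(3) C by fastforce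
    ultimately show ?thesis using C by (auto intro: reval.mu)
  qed
qed

definition validL :: "(nat \<times> nat \<times> nat) list \<Rightarrow> bool" where
  "validL L \<longleftrightarrow> validS (\<lambda>k. L ! k) (length L)"

lemma occ_shift:
  assumes "occ s i c x r" "\<And>k. k < i \<Longrightarrow> s' (k + d) = s k"
  shows "occ s' (i + d) c x r"
proof -
  obtain k where "k < i" "s k = (c, x, r)" using assms(1) unfolding occ_def by blast
  hence "k + d < i + d" "s' (k + d) = (c, x, r)" using assms(2) by auto
  thus ?thesis unfolding occ_def by blast
qed

lemma validL_append:
  assumes "validL A" "validL B"
  shows "validL (A @ B)"
  unfolding validL_def validS_def
proof (intro allI impI)
  fix i assume i: "i < length (A @ B)"
  let ?s = "\<lambda>k. (A @ B) ! k"
  show "justJ (occ ?s i) (fst (?s i)) (fst (snd (?s i))) (snd (snd (?s i)))"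
  proof (cases "i < length A")
    case True
    have J: "justJ (occ (\<lambda>k. A ! k) i) (fst (A ! i)) (fst (snd (A ! i))) (snd (snd (A ! i)))"
      using assms(1) True unfolding validL_def validS_def by blast
    have "justJ (occ ?s i) (fst (A ! i)) (fst (snd (A ! i))) (snd (snd (A ! i)))"
    proof (rule justJ_mono[OF J])
      fix c x r assume "occ (\<lambda>k. A ! k) i c x r"
      from occ_shift[OF this, of ?s 0] show "occ ?s i c x r" using True by (simp add: nth_append)
    qed
    moreover have "?s i = A ! i" using True by (simp add: nth_append)
    ultimately show ?thesis by simp
  next
    case False
    define i' where "i' = i - length A"
    have i': "i = i' + length A" "i' < length B" using False i unfolding i'_def by auto
    have J: "justJ (occ (\<lambda>k. B ! k) i') (fst (B ! i')) (fst (snd (B ! i'))) (snd (snd (B ! i')))"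
      using assms(2) i' unfolding validL_def validS_def by blast
    have "justJ (occ ?s i) (fst (B ! i')) (fst (snd (B ! i'))) (snd (snd (B ! i')))"
    proof (rule justJ_mono[OF J])
      fix c x r assume "occ (\<lambda>k. B ! k) i' c x r"
      from occ_shift[OF this, of ?s "length A"] show "occ ?s i c x r" using i' by (simp add: nth_append)
    qed
    moreover have "?s i = B ! i'" using i' by (simp add: nth_append)
    ultimately show ?thesis by simp
  qed
qed

lemma validL_Nil: "validL []" unfolding validL_def validS_def by simp

lemma validL_concat: "\<forall>L\<in>set Ls. validL L \<Longrightarrow> validL (concat Ls)"
proof (induction Ls)
  case Nil thus ?case by (simp add: validL_Nil)
next
  case (Cons L Ls) thus ?case using validL_append by simp
qed

lemma validL_snoc:
  assumes "validL A" "justJ (\<lambda>c x r. (c, x, r) \<in> set A) c x r"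
  shows "validL (A @ [(c, x, r)])"
  unfolding validL_def validS_def
proof (intro allI impI)
  fix i assume i: "i < length (A @ [(c, x, r)])"
  let ?s = "\<lambda>k. (A @ [(c, x, r)]) ! k"
  show "justJ (occ ?s i) (fst (?s i)) (fst (snd (?s i))) (snd (snd (?s i)))"
  proof (cases "i < length A")
    case True
    have J: "justJ (occ (\<lambda>k. A ! k) i) (fst (A ! i)) (fst (snd (A ! i))) (snd (snd (A ! i)))"
      using assms(1) True unfolding validL_def validS_def by blast
    have "justJ (occ ?s i) (fst (A ! i)) (fst (snd (A ! i))) (snd (snd (A ! i)))"
    proof (rule justJ_mono[OF J])
      fix c x r assume "occ (\<lambda>k. A ! k) i c x r"
      from occ_shift[OF this, of ?s 0] show "occ ?s i c x r" using True by (simp add: nth_append)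
    qed
    moreover have "?s i = A ! i" using True by (simp add: nth_append)
    ultimately show ?thesis by simp
  next
    case False
    hence ii: "i = length A" using i by simp
    have "justJ (occ ?s i) c x r"
    proof (rule justJ_mono[OF assms(2)])
      fix c' x' r' assume "(c', x', r') \<in> set A"
      then obtain k where "k < length A" "A ! k = (c', x', r')" by (auto simp: in_set_conv_nth)
      hence "k < i" "?s k = (c', x', r')" using ii by (auto simp: nth_append)
      thus "occ ?s i c' x' r'" unfolding occ_def by blast
    qed
    thus ?thesis using ii by simp
  qed
qed


lemma list_encode_cons: "list_encode (a # xs) = cons a (list_encode xs)"
  unfolding cons_def by simp

lemma cons_inj[simp]: "cons a l = cons b m \<longleftrightarrow> a = b \<and> l = m"
  unfolding cons_def by simp

lemma snoc_ex:
  assumes "validL A" "justJ (\<lambda>c x r. (c, x, r) \<in> set A) c x r"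
  shows "\<exists>L. validL L \<and> (c, x, r) \<in> set L"
  using validL_snoc[OF assms] by (intro exI[of _ "A @ [(c, x, r)]"]) simp

lemma cert_complete:
  "reval C xs r \<Longrightarrow> \<exists>L. validL L \<and> (code C, list_encode xs, r) \<in> set L"
proof (induction rule: reval.induct)
  case (zero xs)
  show ?case by (rule snoc_ex[OF validL_Nil]) (simp add: justJ_def)
next
  case (succ x)
  show ?case by (rule snoc_ex[OF validL_Nil]) (simp add: justJ_def cons_def)
next
  case (proj i xs)
  show ?case by (rule snoc_ex[OF validL_Nil]) (use proj in \<open>simp add: justJ_def nthr_def\<close>)
next
  case (comp ys fs xs g r)
  from comp.IH(1) have "\<forall>i<length fs. \<exists>L. validL L \<and> (code (fs ! i), list_encode xs, ys ! i) \<in> set L"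
    by blast
  then obtain Lf where Lf: "\<forall>i<length fs. validL (Lf i) \<and> (code (fs ! i), list_encode xs, ys ! i) \<in> set (Lf i)"
    by metis
  obtain Lg where Lg: "validL Lg" "(code g, list_encode ys, r) \<in> set Lg" using comp.IH(2) by blast
  define A where "A = concat (map Lf [0..<length fs]) @ Lg"
  have "\<forall>L\<in>set (map Lf [0..<length fs]). validL L" using Lf by auto
  hence vA: "validL A" unfolding A_def using Lg(1) validL_append validL_concat by blast
  have "jC (\<lambda>c x r. (c, x, r) \<in> set A) (code (Cn g fs)) (list_encode xs) r"
    unfolding jC_def
  proof (intro exI conjI)
    show "code (Cn g fs) = prod_encode (3, prod_encode (code g, list_encode (map code fs)))" by simp
    show "lenr (list_encode (map code fs)) (length fs)" by (simp add: lenr_def)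
    show "lenr (list_encode ys) (length fs)" using comp.hyps(1) by (simp add: lenr_def)
    show "\<forall>j<length fs. \<exists>u w. nthr (list_encode (map code fs)) j u \<and> nthr (list_encode ys) j w \<and>
        (u, list_encode xs, w) \<in> set A"
    proof (intro allI impI exI conjI)
      fix j assume j: "j < length fs"
      show "nthr (list_encode (map code fs)) j (code (fs ! j))" using j by (simp add: nthr_def)
      show "nthr (list_encode ys) j (ys ! j)" using j comp.hyps(1) by (simp add: nthr_def)
      have "(code (fs ! j), list_encode xs, ys ! j) \<in> set (Lf j)" using Lf j by blast
      moreover have "set (Lf j) \<subseteq> set A" using j unfolding A_def by auto
      ultimately show "(code (fs ! j), list_encode xs, ys ! j) \<in> set A" by blast
    qed
    show "(code g, list_encode ys, r) \<in> set A" using Lg unfolding A_def by simp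
  qed
  hence "justJ (\<lambda>c x r. (c, x, r) \<in> set A) (code (Cn g fs)) (list_encode xs) r"
    unfolding justJ_def by simp
  thus ?case by (rule snoc_ex[OF vA])
next
  case (prim0 f xs r g)
  obtain L where L: "validL L" "(code f, list_encode xs, r) \<in> set L" using prim0.IH by blast
  have "jP (\<lambda>c x r. (c, x, r) \<in> set L) (code (Pr f g)) (list_encode (0 # xs)) r"
    unfolding jP_def
  proof (intro exI conjI disjI1)
    show "code (Pr f g) = prod_encode (4, prod_encode (code f, code g))" by simp
    show "list_encode (0 # xs) = cons 0 (list_encode xs)" by (rule list_encode_cons)
    show "(code f, list_encode xs, r) \<in> set L" by (rule L(2))
  qed
  hence "justJ (\<lambda>c x r. (c, x, r) \<in> set L) (code (Pr f g)) (list_encode (0 # xs)) r"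
    unfolding justJ_def by simp
  thus ?case by (rule snoc_ex[OF L(1)])
next
  case (primS f g k xs r' r)
  obtain L1 where L1: "validL L1" "(code (Pr f g), list_encode (k # xs), r') \<in> set L1" using primS.IH(1) by blast
  obtain L2 where L2: "validL L2" "(code g, list_encode (k # r' # xs), r) \<in> set L2" using primS.IH(2) by blast
  have "jP (\<lambda>c x r. (c, x, r) \<in> set (L1 @ L2)) (code (Pr f g)) (list_encode (Suc k # xs)) r"
    unfolding jP_def
  proof (intro exI conjI disjI2)
    show "code (Pr f g) = prod_encode (4, prod_encode (code f, code g))" by simp
    show "list_encode (Suc k # xs) = cons (Suc k) (list_encode xs)" by (rule list_encode_cons)
    show "(code (Pr f g), cons k (list_encode xs), r') \<in> set (L1 @ L2)" using L1(2) by (simp add: cons_def)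
    show "(code g, cons k (cons r' (list_encode xs)), r) \<in> set (L1 @ L2)" using L2(2) by (simp add: cons_def)
  qed
  hence "justJ (\<lambda>c x r. (c, x, r) \<in> set (L1 @ L2)) (code (Pr f g)) (list_encode (Suc k # xs)) r"
    unfolding justJ_def by simp
  thus ?case by (rule snoc_ex[OF validL_append[OF L1(1) L2(1)]])
next
  case (mu f k xs)
  obtain L0 where L0: "validL L0" "(code f, list_encode (k # xs), 0) \<in> set L0" using mu.IH(1) by blast
  have "\<forall>j<k. \<exists>r L. 0 < r \<and> validL L \<and> (code f, list_encode (j # xs), r) \<in> set L" using mu.IH(2) by blast
  then obtain R Lj where Lj: "\<forall>j<k. 0 < R j \<and> validL (Lj j) \<and> (code f, list_encode (j # xs), R j) \<in> set (Lj j)"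
    by metis
  define A where "A = L0 @ concat (map Lj [0..<k])"
  have "\<forall>L\<in>set (map Lj [0..<k]). validL L" using Lj by auto
  hence vA: "validL A" unfolding A_def using L0(1) validL_append validL_concat by blast
  have "jM (\<lambda>c x r. (c, x, r) \<in> set A) (code (Mn f)) (list_encode xs) k"
    unfolding jM_def
  proof (intro exI conjI allI impI)
    show "code (Mn f) = prod_encode (5, code f)" by simp
    show "(code f, cons k (list_encode xs), 0) \<in> set A" using L0 unfolding A_def by (simp add: cons_def)
    fix j assume j: "j < k"
    show "0 < R j" using Lj j by simp
    have "(code f, list_encode (j # xs), R j) \<in> set (Lj j)" using Lj j by blast
    moreover have "set (Lj j) \<subseteq> set A" using j unfolding A_def by auto
    ultimately show "(code f, cons j (list_encode xs), R j) \<in> set A" by (auto simp: cons_def)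
  qed
  hence "justJ (\<lambda>c x r. (c, x, r) \<in> set A) (code (Mn f)) (list_encode xs) k"
    unfolding justJ_def by simp
  thus ?case by (rule snoc_ex[OF vA])
qed

definition Kp :: "nat \<Rightarrow> bool" where
  "Kp n \<longleftrightarrow> (\<exists>s m i r. i < m \<and> validS s m \<and> s i = (n, cons n 0, r))"

lemma Kp_code: "Kp (code C) \<longleftrightarrow> (\<exists>r. reval C [code C] r)"
proof
  assume "Kp (code C)"
  then obtain s m i r where "i < m" "validS s m" "s i = (code C, cons (code C) 0, r)"
    unfolding Kp_def by blast
  hence "reval C (list_decode (cons (code C) 0)) r" using cert_sound by blast
  thus "\<exists>r. reval C [code C] r" by auto
next
  assume "\<exists>r. reval C [code C] r"
  then obtain r L where L: "validL L" "(code C, list_encode [code C], r) \<in> set L"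
    using cert_complete by blast
  then obtain i where "i < length L" "L ! i = (code C, cons (code C) 0, r)"
    by (auto simp: in_set_conv_nth cons_def)
  thus "Kp (code C)" using L(1) unfolding Kp_def validL_def by blast
qed


declare sig1_const[sigI]

lemma bet_c': "sig1 4 (\<lambda>\<sigma>. bet (\<sigma> 1) (\<sigma> 2) (\<sigma> 3) = \<sigma> 0)"
  using bet_c by (rule sig1_cong) auto
lemmas sig1_bet'[sigI] = inst4[OF bet_c']

lemma drop_chain:
  assumes "s 0 = l" "\<forall>k<j. \<exists>x t. s k = cons x t \<and> s (Suc k) = t"
  shows "k \<le> j \<Longrightarrow> list_decode (s k) = drop k (list_decode l)"
proof (induction k)
  case 0 thus ?case using assms(1) by simp
next
  case (Suc k)
  hence "k < j" by simp
  then obtain x t where "s k = cons x t" "s (Suc k) = t" using assms(2) by blast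
  moreover have "list_decode (s k) = drop k (list_decode l)" using Suc by simp
  ultimately show ?case by (simp add: drop_Suc tl_drop[symmetric]) (metis list.sel(3))
qed

lemma nthr_seq: "nthr l j v \<longleftrightarrow> (\<exists>s. s 0 = l \<and> (\<forall>k<j. \<exists>x t. s k = cons x t \<and> s (Suc k) = t) \<and> (\<exists>t. s j = cons v t))"
proof
  assume h: "nthr l j v"
  let ?L = "list_decode l"
  define s where "s = (\<lambda>k. list_encode (drop k ?L))"
  have jl: "j < length ?L" "?L ! j = v" using h unfolding nthr_def by auto
  have "s 0 = l" unfolding s_def by simp
  moreover have "\<forall>k<j. \<exists>x t. s k = cons x t \<and> s (Suc k) = t"
  proof (intro allI impI)
    fix k assume "k < j"
    hence "drop k ?L = ?L ! k # drop (Suc k) ?L" using jl by (simp add: Cons_nth_drop_Suc)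
    thus "\<exists>x t. s k = cons x t \<and> s (Suc k) = t" unfolding s_def by (simp add: cons_def)
  qed
  moreover have "s j = cons v (s (Suc j))"
    using jl unfolding s_def by (simp add: Cons_nth_drop_Suc[symmetric] cons_def)
  ultimately show "\<exists>s. s 0 = l \<and> (\<forall>k<j. \<exists>x t. s k = cons x t \<and> s (Suc k) = t) \<and> (\<exists>t. s j = cons v t)"
    by blast
next
  assume "\<exists>s. s 0 = l \<and> (\<forall>k<j. \<exists>x t. s k = cons x t \<and> s (Suc k) = t) \<and> (\<exists>t. s j = cons v t)"
  then obtain s t where h: "s 0 = l" "\<forall>k<j. \<exists>x t. s k = cons x t \<and> s (Suc k) = t" "s j = cons v t" by blast
  have "list_decode (s j) = drop j (list_decode l)" using drop_chain[OF h(1,2)] by simp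
  hence "drop j (list_decode l) = v # list_decode t" using h(3) by simp
  thus "nthr l j v" unfolding nthr_def
    by (metis Cons_nth_drop_Suc drop_all list.distinct(1) list.inject not_le_imp_less)
qed

lemma lenr_seq: "lenr l n \<longleftrightarrow> (\<exists>s. s 0 = l \<and> (\<forall>k<n. \<exists>x t. s k = cons x t \<and> s (Suc k) = t) \<and> s n = 0)"
proof
  assume h: "lenr l n"
  let ?L = "list_decode l"
  define s where "s = (\<lambda>k. list_encode (drop k ?L))"
  have jl: "length ?L = n" using h unfolding lenr_def by auto
  have "s 0 = l" unfolding s_def by simp
  moreover have "\<forall>k<n. \<exists>x t. s k = cons x t \<and> s (Suc k) = t"
  proof (intro allI impI)
    fix k assume "k < n"
    hence "drop k ?L = ?L ! k # drop (Suc k) ?L" using jl by (simp add: Cons_nth_drop_Suc)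
    thus "\<exists>x t. s k = cons x t \<and> s (Suc k) = t" unfolding s_def by (simp add: cons_def)
  qed
  moreover have "s n = 0" unfolding s_def using jl by simp
  ultimately show "\<exists>s. s 0 = l \<and> (\<forall>k<n. \<exists>x t. s k = cons x t \<and> s (Suc k) = t) \<and> s n = 0"
    by blast
next
  assume "\<exists>s. s 0 = l \<and> (\<forall>k<n. \<exists>x t. s k = cons x t \<and> s (Suc k) = t) \<and> s n = 0"
  then obtain s where h: "s 0 = l" "\<forall>k<n. \<exists>x t. s k = cons x t \<and> s (Suc k) = t" "s n = 0" by blast
  have "drop n (list_decode l) = []" using drop_chain[OF h(1,2), of n] h(3) by simp
  moreover have "n > 0 \<Longrightarrow> drop (n - 1) (list_decode l) \<noteq> []"
  proof -
    assume "n > 0"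
    then obtain x t where "s (n - 1) = cons x t" using h(2) by (metis diff_less zero_less_one)
    moreover have "list_decode (s (n - 1)) = drop (n - 1) (list_decode l)" using drop_chain[OF h(1,2), of "n - 1"] by simp
    ultimately show ?thesis by (metis list.distinct(1) list_decode_cons)
  qed
  ultimately show "lenr l n" unfolding lenr_def by (cases n) auto
qed

lemma seq_beta:
  "(\<exists>s. P (\<lambda>k. if k \<le> j then s k else 0)) \<Longrightarrow> (\<And>s s'. (\<forall>k\<le>j. s k = s' k) \<Longrightarrow> P s = P s') \<Longrightarrow> \<exists>a b. P (bet a b)"
proof -
  assume h: "\<exists>s. P (\<lambda>k. if k \<le> j then s k else 0)" and c: "\<And>s s'. (\<forall>k\<le>j. s k = s' k) \<Longrightarrow> P s = P s'"
  then obtain s where "P (\<lambda>k. if k \<le> j then s k else 0)" by blast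
  hence Ps: "P s" using c[of s "\<lambda>k. if k \<le> j then s k else 0"] by simp
  obtain a b where "\<forall>k<Suc j. bet a b k = s k" using beta_exists_fun by blast
  hence "P (bet a b) = P s" using c by simp
  thus ?thesis using Ps by blast
qed

lemma nthr_beta: "nthr l j v \<longleftrightarrow> (\<exists>a b. bet a b 0 = l \<and> (\<forall>k<j. \<exists>x t. bet a b k = cons x t \<and> bet a b (Suc k) = t) \<and> (\<exists>t. bet a b j = cons v t))"
proof
  assume "nthr l j v"
  then obtain s where s: "s 0 = l \<and> (\<forall>k<j. \<exists>x t. s k = cons x t \<and> s (Suc k) = t) \<and> (\<exists>t. s j = cons v t)"
    using nthr_seq by blast
  show "\<exists>a b. bet a b 0 = l \<and> (\<forall>k<j. \<exists>x t. bet a b k = cons x t \<and> bet a b (Suc k) = t) \<and> (\<exists>t. bet a b j = cons v t)"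
  proof (rule seq_beta[where j=j])
    show "\<exists>s. (\<lambda>s. s 0 = l \<and> (\<forall>k<j. \<exists>x t. s k = cons x t \<and> s (Suc k) = t) \<and> (\<exists>t. s j = cons v t)) (\<lambda>k. if k \<le> j then s k else 0)"
      using s by (intro exI[of _ s]) auto
  next
    fix s s' :: "nat \<Rightarrow> nat" assume "\<forall>k\<le>j. s k = s' k"
    thus "(s 0 = l \<and> (\<forall>k<j. \<exists>x t. s k = cons x t \<and> s (Suc k) = t) \<and> (\<exists>t. s j = cons v t)) =
          (s' 0 = l \<and> (\<forall>k<j. \<exists>x t. s' k = cons x t \<and> s' (Suc k) = t) \<and> (\<exists>t. s' j = cons v t))"
      by (metis Suc_leI le0 less_imp_le order_refl)
  qed
next
  assume "\<exists>a b. bet a b 0 = l \<and> (\<forall>k<j. \<exists>x t. bet a b k = cons x t \<and> bet a b (Suc k) = t) \<and> (\<exists>t. bet a b j = cons v t)"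
  thus "nthr l j v" using nthr_seq by blast
qed

lemma lenr_beta: "lenr l n \<longleftrightarrow> (\<exists>a b. bet a b 0 = l \<and> (\<forall>k<n. \<exists>x t. bet a b k = cons x t \<and> bet a b (Suc k) = t) \<and> bet a b n = 0)"
proof
  assume "lenr l n"
  then obtain s where s: "s 0 = l \<and> (\<forall>k<n. \<exists>x t. s k = cons x t \<and> s (Suc k) = t) \<and> s n = 0"
    using lenr_seq by blast
  show "\<exists>a b. bet a b 0 = l \<and> (\<forall>k<n. \<exists>x t. bet a b k = cons x t \<and> bet a b (Suc k) = t) \<and> bet a b n = 0"
  proof (rule seq_beta[where j=n])
    show "\<exists>s. (\<lambda>s. s 0 = l \<and> (\<forall>k<n. \<exists>x t. s k = cons x t \<and> s (Suc k) = t) \<and> s n = 0) (\<lambda>k. if k \<le> n then s k else 0)"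
      using s by (intro exI[of _ s]) auto
  next
    fix s s' :: "nat \<Rightarrow> nat" assume "\<forall>k\<le>n. s k = s' k"
    thus "(s 0 = l \<and> (\<forall>k<n. \<exists>x t. s k = cons x t \<and> s (Suc k) = t) \<and> s n = 0) =
          (s' 0 = l \<and> (\<forall>k<n. \<exists>x t. s' k = cons x t \<and> s' (Suc k) = t) \<and> s' n = 0)"
      by (metis Suc_leI le0 less_imp_le order_refl)
  qed
next
  assume "\<exists>a b. bet a b 0 = l \<and> (\<forall>k<n. \<exists>x t. bet a b k = cons x t \<and> bet a b (Suc k) = t) \<and> bet a b n = 0"
  thus "lenr l n" using lenr_seq by blast
qed

lemma nthr_c: "sig1 3 (\<lambda>\<sigma>. nthr (\<sigma> 0) (\<sigma> 1) (\<sigma> 2))"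
proof -
  have "sig1 3 (\<lambda>\<sigma>. \<exists>a b. (\<exists>z. z = 0 \<and> bet a b z = \<sigma> 0) \<and>
     (\<forall>k<\<sigma> 1. \<exists>x t. (\<exists>y. y = bet a b k \<and> y = cons x t) \<and> (\<exists>k1. k1 = Suc k \<and> bet a b k1 = t)) \<and>
     (\<exists>t y. y = bet a b (\<sigma> 1) \<and> y = cons (\<sigma> 2) t))"
    by (((rule sig1_exF, simp) | (rule sig1_allF, simp, simp) | rule sig1_and | rule sig1_or | (rule sigI; simp))+)
  thus ?thesis by (rule sig1_cong) (simp add: nthr_beta)
qed
lemmas sig1_nthr[sigI] = inst3[OF nthr_c]

lemma lenr_c: "sig1 2 (\<lambda>\<sigma>. lenr (\<sigma> 0) (\<sigma> 1))"
proof -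
  have "sig1 2 (\<lambda>\<sigma>. \<exists>a b. (\<exists>z. z = 0 \<and> bet a b z = \<sigma> 0) \<and>
     (\<forall>k<\<sigma> 1. \<exists>x t. (\<exists>y. y = bet a b k \<and> y = cons x t) \<and> (\<exists>k1. k1 = Suc k \<and> bet a b k1 = t)) \<and>
     (\<exists>z. z = 0 \<and> bet a b (\<sigma> 1) = z))"
    by (((rule sig1_exF, simp) | (rule sig1_allF, simp, simp) | rule sig1_and | rule sig1_or | (rule sigI; simp))+)
  thus ?thesis by (rule sig1_cong) (simp add: lenr_beta)
qed
lemmas sig1_lenr[sigI] = inst2[OF lenr_c]


definition occv :: "nat \<Rightarrow> nat \<Rightarrow> nat \<Rightarrow> nat \<Rightarrow> nat \<Rightarrow> nat \<Rightarrow> nat \<Rightarrow> nat \<Rightarrow> nat \<Rightarrow> nat \<Rightarrow> bool" where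
  "occv a1 b1 a2 b2 a3 b3 i u x w \<longleftrightarrow> (\<exists>k<i. bet a1 b1 k = u \<and> bet a2 b2 k = x \<and> bet a3 b3 k = w)"

lemma occv_c: "sig1 10 (\<lambda>\<sigma>. occv (\<sigma> 0) (\<sigma> 1) (\<sigma> 2) (\<sigma> 3) (\<sigma> 4) (\<sigma> 5) (\<sigma> 6) (\<sigma> 7) (\<sigma> 8) (\<sigma> 9))"
proof -
  have "sig1 10 (\<lambda>\<sigma>. \<exists>k. k < \<sigma> 6 \<and> bet (\<sigma> 0) (\<sigma> 1) k = \<sigma> 7 \<and> bet (\<sigma> 2) (\<sigma> 3) k = \<sigma> 8 \<and> bet (\<sigma> 4) (\<sigma> 5) k = \<sigma> 9)"
    by (((rule sig1_exF, simp) | (rule sig1_allF, simp, simp) | rule sig1_and | rule sig1_or | (rule sigI; simp))+)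
  thus ?thesis by (rule sig1_cong) (simp add: occv_def)
qed
lemmas sig1_occv[sigI] = inst10[OF occv_c]

lemma jC_c: "sig1 10 (\<lambda>\<sigma>. jC (occv (\<sigma> 0) (\<sigma> 1) (\<sigma> 2) (\<sigma> 3) (\<sigma> 4) (\<sigma> 5) (\<sigma> 6)) (\<sigma> 7) (\<sigma> 8) (\<sigma> 9))"
proof -
  have "sig1 10 (\<lambda>\<sigma>. \<exists>g fl yl L. (\<exists>t p. t = 3 \<and> p = prod_encode (g, fl) \<and> \<sigma> 7 = prod_encode (t, p)) \<and>
     lenr fl L \<and> lenr yl L \<and> (\<forall>j<L. \<exists>u w. nthr fl j u \<and> nthr yl j w \<and> occv (\<sigma> 0) (\<sigma> 1) (\<sigma> 2) (\<sigma> 3) (\<sigma> 4) (\<sigma> 5) (\<sigma> 6) u (\<sigma> 8) w) \<and>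
     occv (\<sigma> 0) (\<sigma> 1) (\<sigma> 2) (\<sigma> 3) (\<sigma> 4) (\<sigma> 5) (\<sigma> 6) g yl (\<sigma> 9))"
    by (((rule sig1_exF, simp) | (rule sig1_allF, simp, simp) | rule sig1_and | rule sig1_or | (rule sigI; simp))+)
  thus ?thesis by (rule sig1_cong) (simp add: jC_def)
qed
lemmas sig1_jC[sigI] = inst10[OF jC_c]

lemma jP_c: "sig1 10 (\<lambda>\<sigma>. jP (occv (\<sigma> 0) (\<sigma> 1) (\<sigma> 2) (\<sigma> 3) (\<sigma> 4) (\<sigma> 5) (\<sigma> 6)) (\<sigma> 7) (\<sigma> 8) (\<sigma> 9))"
proof -
  have "sig1 10 (\<lambda>\<sigma>. \<exists>f g. (\<exists>t p. t = 4 \<and> p = prod_encode (f, g) \<and> \<sigma> 7 = prod_encode (t, p)) \<and>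
     ((\<exists>x'. (\<exists>z. z = 0 \<and> \<sigma> 8 = cons z x') \<and> occv (\<sigma> 0) (\<sigma> 1) (\<sigma> 2) (\<sigma> 3) (\<sigma> 4) (\<sigma> 5) (\<sigma> 6) f x' (\<sigma> 9)) \<or>
      (\<exists>n x' r'. (\<exists>n1. n1 = Suc n \<and> \<sigma> 8 = cons n1 x') \<and> (\<exists>y. y = cons n x' \<and> occv (\<sigma> 0) (\<sigma> 1) (\<sigma> 2) (\<sigma> 3) (\<sigma> 4) (\<sigma> 5) (\<sigma> 6) (\<sigma> 7) y r') \<and>
         (\<exists>y1 y2. y1 = cons r' x' \<and> y2 = cons n y1 \<and> occv (\<sigma> 0) (\<sigma> 1) (\<sigma> 2) (\<sigma> 3) (\<sigma> 4) (\<sigma> 5) (\<sigma> 6) g y2 (\<sigma> 9)))))"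
    by (((rule sig1_exF, simp) | (rule sig1_allF, simp, simp) | rule sig1_and | rule sig1_or | (rule sigI; simp))+)
  thus ?thesis by (rule sig1_cong) (simp add: jP_def)
qed
lemmas sig1_jP[sigI] = inst10[OF jP_c]

lemma jM_c: "sig1 10 (\<lambda>\<sigma>. jM (occv (\<sigma> 0) (\<sigma> 1) (\<sigma> 2) (\<sigma> 3) (\<sigma> 4) (\<sigma> 5) (\<sigma> 6)) (\<sigma> 7) (\<sigma> 8) (\<sigma> 9))"
proof -
  have "sig1 10 (\<lambda>\<sigma>. \<exists>f. (\<exists>t. t = 5 \<and> \<sigma> 7 = prod_encode (t, f)) \<and>
     (\<exists>y z. y = cons (\<sigma> 9) (\<sigma> 8) \<and> z = 0 \<and> occv (\<sigma> 0) (\<sigma> 1) (\<sigma> 2) (\<sigma> 3) (\<sigma> 4) (\<sigma> 5) (\<sigma> 6) f y z) \<and>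
     (\<forall>j<\<sigma> 9. \<exists>r'. (\<exists>z. z = 0 \<and> z < r') \<and> (\<exists>y. y = cons j (\<sigma> 8) \<and> occv (\<sigma> 0) (\<sigma> 1) (\<sigma> 2) (\<sigma> 3) (\<sigma> 4) (\<sigma> 5) (\<sigma> 6) f y r')))"
    by (((rule sig1_exF, simp) | (rule sig1_allF, simp, simp) | rule sig1_and | rule sig1_or | (rule sigI; simp))+)
  thus ?thesis by (rule sig1_cong) (simp add: jM_def)
qed
lemmas sig1_jM[sigI] = inst10[OF jM_c]

lemma justJ_c: "sig1 10 (\<lambda>\<sigma>. justJ (occv (\<sigma> 0) (\<sigma> 1) (\<sigma> 2) (\<sigma> 3) (\<sigma> 4) (\<sigma> 5) (\<sigma> 6)) (\<sigma> 7) (\<sigma> 8) (\<sigma> 9))"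
proof -
  have "sig1 10 (\<lambda>\<sigma>. ((\<exists>z. z = 0 \<and> \<sigma> 7 = prod_encode (z, z)) \<and> \<sigma> 9 = 0) \<or>
     ((\<exists>t z. t = 1 \<and> z = 0 \<and> \<sigma> 7 = prod_encode (t, z)) \<and> (\<exists>y z. z = 0 \<and> \<sigma> 8 = cons y z \<and> \<sigma> 9 = Suc y)) \<or>
     (\<exists>j t. t = 2 \<and> \<sigma> 7 = prod_encode (t, j) \<and> nthr (\<sigma> 8) j (\<sigma> 9)) \<or>
     jC (occv (\<sigma> 0) (\<sigma> 1) (\<sigma> 2) (\<sigma> 3) (\<sigma> 4) (\<sigma> 5) (\<sigma> 6)) (\<sigma> 7) (\<sigma> 8) (\<sigma> 9) \<or> jP (occv (\<sigma> 0) (\<sigma> 1) (\<sigma> 2) (\<sigma> 3) (\<sigma> 4) (\<sigma> 5) (\<sigma> 6)) (\<sigma> 7) (\<sigma> 8) (\<sigma> 9) \<or> jM (occv (\<sigma> 0) (\<sigma> 1) (\<sigma> 2) (\<sigma> 3) (\<sigma> 4) (\<sigma> 5) (\<sigma> 6)) (\<sigma> 7) (\<sigma> 8) (\<sigma> 9))"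
    by (((rule sig1_exF, simp) | (rule sig1_allF, simp, simp) | rule sig1_and | rule sig1_or | (rule sigI; simp))+)
  thus ?thesis by (rule sig1_cong) (simp add: justJ_def)
qed
lemmas sig1_justJ[sigI] = inst10[OF justJ_c]

definition Kb :: "nat \<Rightarrow> bool" where
  "Kb n \<longleftrightarrow> (\<exists>a1 b1 a2 b2 a3 b3 m i. i < m \<and>
     (\<forall>i'<m. \<exists>c x r'. bet a1 b1 i' = c \<and> bet a2 b2 i' = x \<and> bet a3 b3 i' = r' \<and> justJ (occv a1 b1 a2 b2 a3 b3 i') c x r') \<and>
     bet a1 b1 i = n \<and> (\<exists>z y. z = 0 \<and> y = cons n z \<and> bet a2 b2 i = y))"

lemma Kb_c: "sig1 1 (\<lambda>\<sigma>. Kb (\<sigma> 0))"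
proof -
  have "sig1 1 (\<lambda>\<sigma>. \<exists>a1 b1 a2 b2 a3 b3 m i. i < m \<and>
     (\<forall>i'<m. \<exists>c x r'. bet a1 b1 i' = c \<and> bet a2 b2 i' = x \<and> bet a3 b3 i' = r' \<and> justJ (occv a1 b1 a2 b2 a3 b3 i') c x r') \<and>
     bet a1 b1 i = \<sigma> 0 \<and> (\<exists>z y. z = 0 \<and> y = cons (\<sigma> 0) z \<and> bet a2 b2 i = y))"
    by (((rule sig1_exF, simp) | (rule sig1_allF, simp, simp) | rule sig1_and | rule sig1_or | (rule sigI; simp))+)
  thus ?thesis by (rule sig1_cong) (simp add: Kb_def)
qed

lemma Kb_alt: "Kb n \<longleftrightarrow> (\<exists>a1 b1 a2 b2 a3 b3 m i. i < m \<and>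
     (\<forall>i'<m. justJ (occv a1 b1 a2 b2 a3 b3 i') (bet a1 b1 i') (bet a2 b2 i') (bet a3 b3 i')) \<and>
     bet a1 b1 i = n \<and> bet a2 b2 i = cons n 0)"
  unfolding Kb_def by simp

lemma Kp_Kb: "Kp n \<longleftrightarrow> Kb n"
proof
  assume "Kp n"
  then obtain s m i r where h: "i < m" "validS s m" "s i = (n, cons n 0, r)" unfolding Kp_def by blast
  obtain a1 b1 where e1: "\<forall>k<m. bet a1 b1 k = fst (s k)" using beta_exists_fun[of m "\<lambda>k. fst (s k)"] by blast
  obtain a2 b2 where e2: "\<forall>k<m. bet a2 b2 k = fst (snd (s k))" using beta_exists_fun[of m "\<lambda>k. fst (snd (s k))"] by blast
  obtain a3 b3 where e3: "\<forall>k<m. bet a3 b3 k = snd (snd (s k))" using beta_exists_fun[of m "\<lambda>k. snd (snd (s k))"] by blast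
  have "\<forall>i'<m. justJ (occv a1 b1 a2 b2 a3 b3 i') (bet a1 b1 i') (bet a2 b2 i') (bet a3 b3 i')"
  proof (intro allI impI)
    fix i' assume i': "i' < m"
    have J: "justJ (occ s i') (fst (s i')) (fst (snd (s i'))) (snd (snd (s i')))"
      using h(2) i' unfolding validS_def by blast
    have "justJ (occv a1 b1 a2 b2 a3 b3 i') (fst (s i')) (fst (snd (s i'))) (snd (snd (s i')))"
    proof (rule justJ_mono[OF J])
      fix c x r assume "occ s i' c x r"
      then obtain k where k: "k < i'" "s k = (c, x, r)" unfolding occ_def by blast
      hence "k < m" using i' by simp
      hence "bet a1 b1 k = c" "bet a2 b2 k = x" "bet a3 b3 k = r" using e1 e2 e3 k(2) by auto
      thus "occv a1 b1 a2 b2 a3 b3 i' c x r" unfolding occv_def using k(1) by (intro exI[of _ k]) simp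
    qed
    moreover have "bet a1 b1 i' = fst (s i')" "bet a2 b2 i' = fst (snd (s i'))" "bet a3 b3 i' = snd (snd (s i'))"
      using e1 e2 e3 i' by auto
    ultimately show "justJ (occv a1 b1 a2 b2 a3 b3 i') (bet a1 b1 i') (bet a2 b2 i') (bet a3 b3 i')"
      by simp
  qed
  moreover have "bet a1 b1 i = n" "bet a2 b2 i = cons n 0" using e1 e2 h(1,3) by auto
  ultimately show "Kb n" unfolding Kb_alt
    by (intro exI[of _ a1] exI[of _ b1] exI[of _ a2] exI[of _ b2] exI[of _ a3] exI[of _ b3] exI[of _ m] exI[of _ i] conjI h(1))
next
  assume "Kb n"
  then obtain a1 b1 a2 b2 a3 b3 m i where h: "i < m"
     "\<forall>i'<m. justJ (occv a1 b1 a2 b2 a3 b3 i') (bet a1 b1 i') (bet a2 b2 i') (bet a3 b3 i')"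
     "bet a1 b1 i = n" "bet a2 b2 i = cons n 0"
    unfolding Kb_alt by blast
  define s where "s = (\<lambda>k. (bet a1 b1 k, bet a2 b2 k, bet a3 b3 k))"
  have "occ s i' = occv a1 b1 a2 b2 a3 b3 i'" for i'
    unfolding occ_def occv_def s_def by (simp add: fun_eq_iff)
  hence "validS s m" unfolding validS_def using h(2) by (simp add: s_def)
  moreover have "s i = (n, cons n 0, bet a3 b3 i)" unfolding s_def using h by simp
  ultimately show "Kp n" unfolding Kp_def
    by (intro exI[of _ s] exI[of _ m] exI[of _ i] exI[of _ "bet a3 b3 i"] conjI h(1))
qed

lemma Kp_sig: "sig1 1 (\<lambda>\<sigma>. Kp (\<sigma> 0))"
  using Kb_c by (rule sig1_cong) (simp add: Kp_Kb)


definition b2r :: "bool \<Rightarrow> real" where "b2r P = (if P then 0 else 1)"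

definition AND :: "fm \<Rightarrow> fm \<Rightarrow> fm" where "AND a b = Neg (Minus (Neg a) b)"
definition OR :: "fm \<Rightarrow> fm \<Rightarrow> fm" where "OR a b = Minus a (Minus a b)"

lemma fval_AND_real: "fval p \<sigma> (AND a b) = min 1 (fval p \<sigma> a + fval p \<sigma> b)"
  unfolding AND_def by simp

lemma fval_AND: "fval p \<sigma> a = b2r P \<Longrightarrow> fval p \<sigma> b = b2r Q \<Longrightarrow> fval p \<sigma> (AND a b) = b2r (P \<and> Q)"
  unfolding fval_AND_real b2r_def by auto
lemma fval_OR: "fval p \<sigma> a = b2r P \<Longrightarrow> fval p \<sigma> b = b2r Q \<Longrightarrow> fval p \<sigma> (OR a b) = b2r (P \<or> Q)"
  unfolding OR_def b2r_def by auto
lemma fval_Neg: "fval p \<sigma> a = b2r P \<Longrightarrow> fval p \<sigma> (Neg a) = b2r (\<not> P)"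
  unfolding b2r_def by auto
lemma fval_Eq: "fval p \<sigma> (Eq s t) = b2r (tval p \<sigma> s = tval p \<sigma> t)"
  unfolding b2r_def by auto

lemma fval_Inf:
  assumes "0 < p" "\<And>m. m < p \<Longrightarrow> fval p (\<sigma>(x := m)) a = b2r (P m)"
  shows "fval p \<sigma> (Inf x a) = b2r (\<exists>m<p. P m)"
proof -
  have "(\<lambda>m. fval p (\<sigma>(x := m)) a) ` {0..<p} = (\<lambda>m. b2r (P m)) ` {0..<p}"
    using assms(2) by (intro image_cong) auto
  moreover have "Min ((\<lambda>m. b2r (P m)) ` {0..<p}) = b2r (\<exists>m<p. P m)"
  proof (cases "\<exists>m<p. P m")
    case True
    then obtain m where "m < p" "P m" by blast
    hence "0 \<in> (\<lambda>m. b2r (P m)) ` {0..<p}" unfolding b2r_def by force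
    moreover have "\<forall>y\<in>(\<lambda>m. b2r (P m)) ` {0..<p}. 0 \<le> y" unfolding b2r_def by auto
    ultimately have "Min ((\<lambda>m. b2r (P m)) ` {0..<p}) = 0"
      by (intro Min_eqI) auto
    moreover have "b2r (\<exists>m<p. P m) = 0" using True by (simp add: b2r_def)
    ultimately show ?thesis by (simp only:)
  next
    case False
    hence "(\<lambda>m. b2r (P m)) ` {0..<p} = {1}" using assms(1) unfolding b2r_def by auto
    hence "Min ((\<lambda>m. b2r (P m)) ` {0..<p}) = 1" by (metis Min_singleton)
    moreover have "b2r (\<exists>m<p. P m) = 1" using False by (simp add: b2r_def)
    ultimately show ?thesis by (simp only:)
  qed
  ultimately show ?thesis by simp
qed

lemma fval_Sup:
  assumes "0 < p" "\<And>m. m < p \<Longrightarrow> fval p (\<sigma>(x := m)) a = b2r (P m)"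
  shows "fval p \<sigma> (Sup x a) = b2r (\<forall>m<p. P m)"
proof -
  have "(\<lambda>m. fval p (\<sigma>(x := m)) a) ` {0..<p} = (\<lambda>m. b2r (P m)) ` {0..<p}"
    using assms(2) by (intro image_cong) auto
  moreover have "Max ((\<lambda>m. b2r (P m)) ` {0..<p}) = b2r (\<forall>m<p. P m)"
  proof (cases "\<forall>m<p. P m")
    case False
    then obtain m where "m < p" "\<not> P m" by blast
    hence "1 \<in> (\<lambda>m. b2r (P m)) ` {0..<p}" unfolding b2r_def by force
    moreover have "\<forall>y\<in>(\<lambda>m. b2r (P m)) ` {0..<p}. y \<le> 1" unfolding b2r_def by auto
    ultimately have "Max ((\<lambda>m. b2r (P m)) ` {0..<p}) = 1"
      by (intro Max_eqI) auto
    moreover have "b2r (\<forall>m<p. P m) = 1" using False by (simp add: b2r_def)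
    ultimately show ?thesis by (simp only:)
  next
    case True
    hence "(\<lambda>m. b2r (P m)) ` {0..<p} = {0}" using assms(1) unfolding b2r_def by auto
    hence "Max ((\<lambda>m. b2r (P m)) ` {0..<p}) = 0" by (metis Max_singleton)
    moreover have "b2r (\<forall>m<p. P m) = 0" using True by (simp add: b2r_def)
    ultimately show ?thesis by (simp only:)
  qed
  ultimately show ?thesis by simp
qed

lemma tval_lt: "0 < p \<Longrightarrow> tval p \<sigma> t < p"
  by (cases t) auto

definition NW :: "tm \<Rightarrow> tm \<Rightarrow> fm" where
  "NW s t = (let d = Minus (AND (Half (Lam s)) (Half (Lam t))) (Half (Lam (Add s t))) in AND d d)"

lemma fval_NW:
  assumes p: "0 < p"
  shows "fval p \<sigma> (NW s t) = b2r (tval p \<sigma> s + tval p \<sigma> t < p)"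
proof -
  define A where "A = tval p \<sigma> s"
  define B where "B = tval p \<sigma> t"
  have AB: "A < p" "B < p" unfolding A_def B_def using tval_lt[OF p] by auto
  have lA: "Lambda p A = real A / real p" "Lambda p B = real B / real p"
    unfolding Lambda_def using AB by auto
  have lAB: "Lambda p ((A + B) mod p) = real ((A + B) mod p) / real p"
    unfolding Lambda_def by simp
  have hs: "min 1 (real A / real p / 2 + real B / real p / 2) = (real A + real B) / (2 * real p)"
  proof -
    have "real A + real B < 2 * real p" using AB by linarith
    hence "(real A + real B) / (2 * real p) < 1" using p by (simp add: field_simps)
    moreover have "real A / real p / 2 + real B / real p / 2 = (real A + real B) / (2 * real p)"
      by (simp add: add_divide_distrib)
    ultimately show ?thesis by linarith
  qed
  have "fval p \<sigma> (NW s t) = min 1 (2 * max 0 ((real A + real B) / (2 * real p) - real ((A + B) mod p) / real p / 2))"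
    unfolding NW_def Let_def using hs lA lAB
    by (simp add: fval_AND_real A_def[symmetric] B_def[symmetric])
  also have "\<dots> = b2r (A + B < p)"
  proof (cases "A + B < p")
    case True
    hence "(A + B) mod p = A + B" by simp
    thus ?thesis using True p by (simp add: b2r_def field_simps)
  next
    case False
    hence "(A + B) mod p = A + B - p" using AB by (simp add: le_mod_geq)
    hence e: "real ((A + B) mod p) = real A + real B - real p" using False by simp
    have h: "(real A + real B) / (2 * real p) - real ((A + B) mod p) / real p / 2 = 1 / 2"
      unfolding e using p by (simp add: field_simps)
    show ?thesis using False unfolding h b2r_def by simp
  qed
  finally show ?thesis unfolding A_def B_def .
qed

definition LTF :: "nat \<Rightarrow> nat \<Rightarrow> nat \<Rightarrow> fm" where
  "LTF u t b = AND (AND (Eq (Add (V u) (V t)) (V b)) (NW (V u) (V t))) (Neg (Eq (Add (V u) (V u)) (V u)))"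

lemma double_mod: "u < p \<Longrightarrow> ((u + u) mod p = u \<longleftrightarrow> u = (0::nat))"
proof (cases "u + u < p")
  case True thus ?thesis by simp
next
  case False
  assume "u < p"
  hence "(u + u) mod p = u + u - p" using False by (simp add: le_mod_geq)
  thus ?thesis using \<open>u < p\<close> False by auto
qed

lemma add_nowrap: "z < p \<Longrightarrow> ((x + y) mod p = z \<and> x + y < p) \<longleftrightarrow> x + y = (z::nat)"
  by auto

lemma fval_LTF:
  assumes p: "0 < p"
  shows "fval p \<sigma> (LTF u t b) = b2r (\<sigma> u mod p + \<sigma> t mod p = \<sigma> b mod p \<and> \<sigma> u mod p \<noteq> 0)"
proof -
  have "fval p \<sigma> (LTF u t b) = b2r (((\<sigma> u mod p + \<sigma> t mod p) mod p = \<sigma> b mod p \<and> \<sigma> u mod p + \<sigma> t mod p < p) \<and>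
      \<not> (\<sigma> u mod p + \<sigma> u mod p) mod p = \<sigma> u mod p)"
    unfolding LTF_def by (intro fval_AND fval_Neg) (auto simp: b2r_def fval_NW[OF p])
  also have "\<dots> = b2r (\<sigma> u mod p + \<sigma> t mod p = \<sigma> b mod p \<and> \<sigma> u mod p \<noteq> 0)"
    using double_mod[of "\<sigma> u mod p" p] add_nowrap[of "\<sigma> b mod p" p "\<sigma> u mod p" "\<sigma> t mod p"] p by simp
  finally show ?thesis .
qed

definition MW :: "nat \<Rightarrow> nat \<Rightarrow> fm" where
  "MW a b = Sup (Suc (a + b)) (Sup (Suc (Suc (a + b)))
     (OR (Neg (LTF (Suc (Suc (a + b))) (Suc (a + b)) b)) (NW (Mul (V a) (V (Suc (a + b)))) (V a))))"

lemma fval_MW: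
  assumes p: "0 < p"
  shows "fval p \<sigma> (MW a b) = b2r (\<forall>m<p. \<forall>m'<p. (m' + m = \<sigma> b mod p \<and> m' \<noteq> 0) \<longrightarrow> (\<sigma> a mod p * m) mod p + \<sigma> a mod p < p)"
  unfolding MW_def
proof (rule fval_Sup[OF p])
  fix m assume m: "m < p"
  show "fval p (\<sigma>(Suc (a + b) := m)) (Sup (Suc (Suc (a + b)))
     (OR (Neg (LTF (Suc (Suc (a + b))) (Suc (a + b)) b)) (NW (Mul (V a) (V (Suc (a + b)))) (V a)))) =
     b2r (\<forall>m'<p. (m' + m = \<sigma> b mod p \<and> m' \<noteq> 0) \<longrightarrow> (\<sigma> a mod p * m) mod p + \<sigma> a mod p < p)"
  proof (rule fval_Sup[OF p])
    fix m' assume m': "m' < p"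
    show "fval p (\<sigma>(Suc (a + b) := m, Suc (Suc (a + b)) := m'))
        (OR (Neg (LTF (Suc (Suc (a + b))) (Suc (a + b)) b)) (NW (Mul (V a) (V (Suc (a + b)))) (V a))) =
       b2r ((m' + m = \<sigma> b mod p \<and> m' \<noteq> 0) \<longrightarrow> (\<sigma> a mod p * m) mod p + \<sigma> a mod p < p)"
      unfolding imp_conv_disj
      by (intro fval_OR fval_Neg) (use m m' in \<open>auto simp: fval_LTF[OF p] fval_NW[OF p] b2r_def\<close>)
  qed
qed

lemma mul_nowrap:
  assumes "a < p" "b < p" "c < (p::nat)"
  shows "((a * b) mod p = c \<and> (\<forall>t<b. (a * t) mod p + a < p)) \<longleftrightarrow> a * b = c"
proof
  assume h: "(a * b) mod p = c \<and> (\<forall>t<b. (a * t) mod p + a < p)"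
  have "\<forall>k\<le>b. a * k < p"
  proof (intro allI impI)
    fix k assume "k \<le> b"
    thus "a * k < p"
    proof (induction k)
      case 0 thus ?case using assms by simp
    next
      case (Suc k)
      hence "a * k < p" "k < b" by auto
      hence "(a * k) mod p + a < p" using h by blast
      thus ?case using \<open>a * k < p\<close> by simp
    qed
  qed
  hence "a * b < p" by simp
  thus "a * b = c" using h by simp
next
  assume h: "a * b = c"
  have "\<forall>t<b. (a * t) mod p + a < p"
  proof (intro allI impI)
    fix t assume "t < b"
    hence "a * Suc t \<le> a * b" by (intro mult_le_mono2) simp
    hence "a * t + a \<le> a * b" by simp
    moreover have "(a * t) mod p \<le> a * t" by (rule mod_less_eq_dividend)
    ultimately show "(a * t) mod p + a < p" using h assms(3) by linarith
  qed
  thus "(a * b) mod p = c \<and> (\<forall>t<b. (a * t) mod p + a < p)" using h assms(3) by simp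
qed

primrec tr :: "af \<Rightarrow> fm" where
  "tr (AEq a b) = Eq (V a) (V b)"
| "tr (ANe a b) = Neg (Eq (V a) (V b))"
| "tr (AAdd a b c) = AND (Eq (Add (V a) (V b)) (V c)) (NW (V a) (V b))"
| "tr (AMul a b c) = AND (Eq (Mul (V a) (V b)) (V c)) (MW a b)"
| "tr (AAnd A B) = AND (tr A) (tr B)"
| "tr (AOr A B) = OR (tr A) (tr B)"
| "tr (AEx x A) = Inf x (tr A)"
| "tr (AAll x y A) = Sup x (OR (Neg (Inf (Suc (x + y)) (LTF (Suc (x + y)) x y))) (tr A))"

lemma fvars_NW: "fvars (NW s t) = tvars s \<union> tvars t"
  unfolding NW_def Let_def AND_def by auto
lemma fvars_LTF: "fvars (LTF u t b) = {u, t, b}"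
  unfolding LTF_def AND_def by (auto simp: fvars_NW)

lemma fvars_tr: "fvars (tr A) \<subseteq> afv A"
proof (induction A)
  case (AMul a b c)
  show ?case unfolding tr.simps MW_def AND_def OR_def by (auto simp: fvars_NW fvars_LTF)
next
  case (AAll x y A)
  show ?case using AAll unfolding tr.simps OR_def by (auto simp: fvars_LTF)
qed (auto simp: AND_def OR_def fvars_NW)

lemma tr_sem:
  "okA A \<Longrightarrow> 0 < p \<Longrightarrow> fval p \<sigma> (tr A) = b2r (hb (\<lambda>x. x < p) (\<lambda>x. \<sigma> x mod p) A)"
proof (induction A arbitrary: \<sigma>)
  case (AEq a b) thus ?case by (simp add: b2r_def)
next
  case (ANe a b) thus ?case by (simp add: b2r_def)
next
  case (AAdd a b c)
  have "fval p \<sigma> (tr (AAdd a b c)) = b2r ((\<sigma> a mod p + \<sigma> b mod p) mod p = \<sigma> c mod p \<and> \<sigma> a mod p + \<sigma> b mod p < p)"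
    by (simp, intro fval_AND) (auto simp: b2r_def fval_NW[OF AAdd.prems(2)])
  also have "\<dots> = b2r (\<sigma> a mod p + \<sigma> b mod p = \<sigma> c mod p)"
    using add_nowrap[of "\<sigma> c mod p" p "\<sigma> a mod p" "\<sigma> b mod p"] AAdd.prems(2) by simp
  finally show ?case by simp
next
  case (AMul a b c)
  have p: "0 < p" by fact
  have eqv: "(\<forall>m<p. \<forall>m'<p. (m' + m = \<sigma> b mod p \<and> m' \<noteq> 0) \<longrightarrow> (\<sigma> a mod p * m) mod p + \<sigma> a mod p < p)
     \<longleftrightarrow> (\<forall>t<\<sigma> b mod p. (\<sigma> a mod p * t) mod p + \<sigma> a mod p < p)"
  proof
    assume h: "\<forall>m<p. \<forall>m'<p. (m' + m = \<sigma> b mod p \<and> m' \<noteq> 0) \<longrightarrow> (\<sigma> a mod p * m) mod p + \<sigma> a mod p < p"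
    show "\<forall>t<\<sigma> b mod p. (\<sigma> a mod p * t) mod p + \<sigma> a mod p < p"
    proof (intro allI impI)
      fix t assume t: "t < \<sigma> b mod p"
      have bp: "\<sigma> b mod p < p" using p by simp
      have tp: "t < p" using t bp by simp
      have "\<sigma> b mod p - t < p" using bp by simp
      moreover have "(\<sigma> b mod p - t) + t = \<sigma> b mod p \<and> \<sigma> b mod p - t \<noteq> 0" using t by auto
      ultimately show "(\<sigma> a mod p * t) mod p + \<sigma> a mod p < p"
        using h tp by blast
    qed
  next
    assume h: "\<forall>t<\<sigma> b mod p. (\<sigma> a mod p * t) mod p + \<sigma> a mod p < p"
    show "\<forall>m<p. \<forall>m'<p. (m' + m = \<sigma> b mod p \<and> m' \<noteq> 0) \<longrightarrow> (\<sigma> a mod p * m) mod p + \<sigma> a mod p < p"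
      using h by auto
  qed
  have "fval p \<sigma> (tr (AMul a b c)) = b2r ((\<sigma> a mod p * (\<sigma> b mod p)) mod p = \<sigma> c mod p \<and>
      (\<forall>t<\<sigma> b mod p. (\<sigma> a mod p * t) mod p + \<sigma> a mod p < p))"
  proof -
    have mw: "fval p \<sigma> (MW a b) = b2r (\<forall>t<\<sigma> b mod p. (\<sigma> a mod p * t) mod p + \<sigma> a mod p < p)"
      unfolding fval_MW[OF p] eqv by (rule refl)
    show ?thesis by (simp only: tr.simps, intro fval_AND mw) (simp add: b2r_def)
  qed
  also have "\<dots> = b2r (\<sigma> a mod p * (\<sigma> b mod p) = \<sigma> c mod p)"
    using mul_nowrap[of "\<sigma> a mod p" p "\<sigma> b mod p" "\<sigma> c mod p"] p by simp
  finally show ?case by simp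
next
  case (AAnd A B) thus ?case by (simp add: fval_AND)
next
  case (AOr A B) thus ?case by (simp add: fval_OR)
next
  case (AEx x A)
  have "fval p \<sigma> (Inf x (tr A)) = b2r (\<exists>m<p. hb (\<lambda>x. x < p) (\<lambda>z. (\<sigma>(x := m)) z mod p) A)"
    by (rule fval_Inf[OF AEx.prems(2)]) (use AEx in simp)
  moreover have "\<And>m. m < p \<Longrightarrow> (\<lambda>z. (\<sigma>(x := m)) z mod p) = (\<lambda>z. \<sigma> z mod p)(x := m)"
    by (auto simp: fun_eq_iff)
  hence "(\<exists>m<p. hb (\<lambda>x. x < p) (\<lambda>z. (\<sigma>(x := m)) z mod p) A) = (\<exists>m<p. hb (\<lambda>x. x < p) ((\<lambda>z. \<sigma> z mod p)(x := m)) A)"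
    by (metis (no_types, lifting))
  ultimately show ?case by simp
next
  case (AAll x y A)
  have p: "0 < p" by fact
  have xy: "x \<noteq> y" "okA A" using AAll.prems by auto
  have "fval p \<sigma> (tr (AAll x y A)) = b2r (\<forall>m<p. \<not> m < \<sigma> y mod p \<or> hb (\<lambda>x. x < p) (\<lambda>z. (\<sigma>(x := m)) z mod p) A)"
    unfolding tr.simps
  proof (rule fval_Sup[OF p])
    fix m assume m: "m < p"
    have lt: "fval p (\<sigma>(x := m)) (Inf (Suc (x + y)) (LTF (Suc (x + y)) x y)) = b2r (m < \<sigma> y mod p)"
    proof -
      have "fval p (\<sigma>(x := m)) (Inf (Suc (x + y)) (LTF (Suc (x + y)) x y)) =
          b2r (\<exists>m'<p. m' + m = \<sigma> y mod p \<and> m' \<noteq> 0)"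
        by (rule fval_Inf[OF p]) (use m xy in \<open>simp add: fval_LTF[OF p]\<close>)
      also have "(\<exists>m'<p. m' + m = \<sigma> y mod p \<and> m' \<noteq> 0) = (m < \<sigma> y mod p)"
      proof
        assume "m < \<sigma> y mod p" thus "\<exists>m'<p. m' + m = \<sigma> y mod p \<and> m' \<noteq> 0"
          using p mod_less_divisor[OF p, of "\<sigma> y"] by (intro exI[of _ "\<sigma> y mod p - m"]) auto
      qed auto
      finally show ?thesis .
    qed
    show "fval p (\<sigma>(x := m)) (OR (Neg (Inf (Suc (x + y)) (LTF (Suc (x + y)) x y))) (tr A)) =
        b2r (\<not> m < \<sigma> y mod p \<or> hb (\<lambda>x. x < p) (\<lambda>z. (\<sigma>(x := m)) z mod p) A)"
      by (intro fval_OR fval_Neg lt AAll.IH xy(2) p)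
  qed
  moreover have "\<And>m. m < p \<Longrightarrow> (\<lambda>z. (\<sigma>(x := m)) z mod p) = (\<lambda>z. \<sigma> z mod p)(x := m)"
    by (auto simp: fun_eq_iff)
  hence "(\<forall>m<p. \<not> m < \<sigma> y mod p \<or> hb (\<lambda>x. x < p) (\<lambda>z. (\<sigma>(x := m)) z mod p) A) =
     (\<forall>m<p. m < \<sigma> y mod p \<longrightarrow> hb (\<lambda>x. x < p) ((\<lambda>z. \<sigma> z mod p)(x := m)) A)"
    by (metis (no_types, lifting))
  ultimately show ?case by simp
qed


lemma fval_range: "0 < p \<Longrightarrow> 0 \<le> fval p \<sigma> \<phi> \<and> fval p \<sigma> \<phi> \<le> 1"
proof (induction \<phi> arbitrary: \<sigma>)
  case (Lam t)
  have "real (tval p \<sigma> t mod p) < real p" using Lam by simp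
  thus ?case using Lam by (simp add: Lambda_def divide_le_eq_1)
next
  case (Sup x a)
  let ?S = "(\<lambda>m. fval p (\<sigma>(x := m)) a) ` {0..<p}"
  have fin: "finite ?S" "?S \<noteq> {}" using Sup.prems by auto
  have "\<forall>y\<in>?S. 0 \<le> y \<and> y \<le> 1" using Sup by auto
  moreover have "Max ?S \<in> ?S" using fin by (rule Max_in)
  ultimately have "0 \<le> Max ?S \<and> Max ?S \<le> 1" by blast
  thus ?case by (simp only: fval.simps)
next
  case (Inf x a)
  let ?S = "(\<lambda>m. fval p (\<sigma>(x := m)) a) ` {0..<p}"
  have fin: "finite ?S" "?S \<noteq> {}" using Inf.prems by auto
  have "\<forall>y\<in>?S. 0 \<le> y \<and> y \<le> 1" using Inf by auto
  moreover have "Min ?S \<in> ?S" using fin by (rule Min_in)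
  ultimately have "0 \<le> Min ?S \<and> Min ?S \<le> 1" by blast
  thus ?case by (simp only: fval.simps)
next
  case (Half a)
  have "0 \<le> fval p \<sigma> a \<and> fval p \<sigma> a \<le> 1" using Half by blast
  thus ?case by simp
next
  case (Neg a)
  have "0 \<le> fval p \<sigma> a \<and> fval p \<sigma> a \<le> 1" using Neg by blast
  thus ?case by simp
next
  case (Minus a b)
  have "0 \<le> fval p \<sigma> a \<and> fval p \<sigma> a \<le> 1" "0 \<le> fval p \<sigma> b \<and> fval p \<sigma> b \<le> 1" using Minus by blast+
  thus ?case by simp
qed (auto simp: Lambda_def)

lemma fval_AND_guard:
  assumes "0 < p" "fval p \<sigma> a = b2r P" "P \<Longrightarrow> fval p \<sigma> b = b2r Q"
  shows "fval p \<sigma> (AND a b) = b2r (P \<and> Q)"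
proof (cases P)
  case True thus ?thesis using assms fval_AND by blast
next
  case False
  have "0 \<le> fval p \<sigma> b" using fval_range[OF assms(1)] by blast
  thus ?thesis using False assms(2) unfolding fval_AND_real b2r_def by simp
qed

definition SUCC :: "nat \<Rightarrow> nat \<Rightarrow> fm" where
  "SUCC a b = AND (Eq (Add (V a) (V 2)) (V b)) (NW (V a) (V 2))"

primrec Tn :: "nat \<Rightarrow> fm" where
  "Tn 0 = Eq (Add (V 0) (V 0)) (V 0)"
| "Tn (Suc k) = Inf 1 (AND (SUCC 1 0) (Inf 0 (AND (Eq (V 0) (V 1)) (Tn k))))"

lemma Tn_sem: "0 < p \<Longrightarrow> \<sigma> 2 mod p = 1 \<Longrightarrow> fval p \<sigma> (Tn k) = b2r (\<sigma> 0 mod p = k)"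
proof (induction k arbitrary: \<sigma>)
  case 0
  thus ?case using double_mod[of "\<sigma> 0 mod p" p] by (simp add: b2r_def)
next
  case (Suc k)
  have p: "0 < p" by fact
  have "fval p \<sigma> (Tn (Suc k)) = b2r (\<exists>m<p. m + 1 = \<sigma> 0 mod p \<and> (\<exists>m'<p. m' = m \<and> m' = k))"
    unfolding Tn.simps
  proof (rule fval_Inf[OF p])
    fix m assume m: "m < p"
    let ?s = "\<sigma>(1 := m)"
    have s1: "fval p ?s (SUCC 1 0) = b2r (m + 1 = \<sigma> 0 mod p)"
    proof -
      have "fval p ?s (SUCC 1 0) = b2r ((m + 1) mod p = \<sigma> 0 mod p \<and> m + 1 < p)"
        unfolding SUCC_def using m Suc.prems(2)
        by (intro fval_AND) (simp_all add: b2r_def fval_NW[OF p])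
      thus ?thesis using add_nowrap[of "\<sigma> 0 mod p" p m 1] p by simp
    qed
    have s2: "fval p ?s (Inf 0 (AND (Eq (V 0) (V 1)) (Tn k))) = b2r (\<exists>m'<p. m' = m \<and> m' = k)"
    proof (rule fval_Inf[OF p])
      fix m' assume m': "m' < p"
      have "(?s(0 := m')) 2 mod p = 1" using Suc.prems(2) by simp
      hence "fval p (?s(0 := m')) (Tn k) = b2r (m' = k)" using Suc.IH[OF p] m' by simp
      thus "fval p (?s(0 := m')) (AND (Eq (V 0) (V 1)) (Tn k)) = b2r (m' = m \<and> m' = k)"
        using m m' by (intro fval_AND) (simp_all add: b2r_def)
    qed
    show "fval p ?s (AND (SUCC 1 0) (Inf 0 (AND (Eq (V 0) (V 1)) (Tn k)))) =
        b2r (m + 1 = \<sigma> 0 mod p \<and> (\<exists>m'<p. m' = m \<and> m' = k))"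
      by (rule fval_AND[OF s1 s2])
  qed
  also have "(\<exists>m<p. m + 1 = \<sigma> 0 mod p \<and> (\<exists>m'<p. m' = m \<and> m' = k)) = (\<sigma> 0 mod p = Suc k)"
    using mod_less_divisor[OF p, of "\<sigma> 0"] by auto
  finally show ?case .
qed

definition ONE :: fm where "ONE = Sup 3 (Eq (Mul (V 3) (V 2)) (V 3))"

lemma ONE_sem: "1 < p \<Longrightarrow> fval p \<sigma> ONE = b2r (\<sigma> 2 mod p = 1)"
proof -
  assume p1: "1 < p"
  hence p: "0 < p" by simp
  have "fval p \<sigma> ONE = b2r (\<forall>w<p. (w * (\<sigma> 2 mod p)) mod p = w)"
    unfolding ONE_def by (rule fval_Sup[OF p]) (simp add: b2r_def)
  also have "(\<forall>w<p. (w * (\<sigma> 2 mod p)) mod p = w) = (\<sigma> 2 mod p = 1)"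
  proof
    assume "\<forall>w<p. (w * (\<sigma> 2 mod p)) mod p = w"
    hence "(1 * (\<sigma> 2 mod p)) mod p = 1" using p1 by blast
    thus "\<sigma> 2 mod p = 1" by simp
  qed simp
  finally show ?thesis .
qed

definition psi :: "nat \<Rightarrow> af \<Rightarrow> fm" where
  "psi n H = Inf 2 (AND ONE (Inf 0 (AND (Tn n) (tr H))))"

lemma fvars_Tn: "fvars (Tn k) \<subseteq> {0, 2}"
  by (induction k) (auto simp: SUCC_def AND_def fvars_NW)

lemma psi_sentence: "afv H \<subseteq> {0} \<Longrightarrow> sentence (psi n H)"
  unfolding sentence_def psi_def AND_def ONE_def using fvars_Tn[of n] fvars_tr[of H] by auto

lemma psi_sem:
  assumes p1: "1 < p" and H: "afv H \<subseteq> {0}" "okA H"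
  shows "fval p \<sigma> (psi n H) = b2r (n < p \<and> hb (\<lambda>x. x < p) (\<lambda>z. n) H)"
proof -
  have p: "0 < p" using p1 by simp
  have "fval p \<sigma> (psi n H) = b2r (\<exists>v<p. v = 1 \<and> (\<exists>x<p. x = n \<and> hb (\<lambda>x. x < p) (\<lambda>z. n) H))"
    unfolding psi_def
  proof (rule fval_Inf[OF p])
    fix v assume v: "v < p"
    show "fval p (\<sigma>(2 := v)) (AND ONE (Inf 0 (AND (Tn n) (tr H)))) =
        b2r (v = 1 \<and> (\<exists>x<p. x = n \<and> hb (\<lambda>x. x < p) (\<lambda>z. n) H))"
    proof (rule fval_AND_guard[OF p])
      show "fval p (\<sigma>(2 := v)) ONE = b2r (v = 1)" using ONE_sem[OF p1] v by simp
      assume v1: "v = 1"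
      show "fval p (\<sigma>(2 := v)) (Inf 0 (AND (Tn n) (tr H))) = b2r (\<exists>x<p. x = n \<and> hb (\<lambda>x. x < p) (\<lambda>z. n) H)"
      proof (rule fval_Inf[OF p])
        fix x assume x: "x < p"
        let ?s = "\<sigma>(2 := v, 0 := x)"
        have t: "fval p ?s (Tn n) = b2r (x = n)" using Tn_sem[OF p, of ?s n] v1 x p1 by simp
        have "fval p ?s (tr H) = b2r (hb (\<lambda>x. x < p) (\<lambda>z. ?s z mod p) H)" by (rule tr_sem[OF H(2) p])
        also have "hb (\<lambda>x. x < p) (\<lambda>z. ?s z mod p) H = hb (\<lambda>x. x < p) (\<lambda>z. x) H"
          using H(1) x by (intro hb_cong) auto
        finally have h: "fval p ?s (tr H) = b2r (hb (\<lambda>x. x < p) (\<lambda>z. x) H)" .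
        have "fval p ?s (AND (Tn n) (tr H)) = b2r (x = n \<and> hb (\<lambda>x. x < p) (\<lambda>z. x) H)"
          by (rule fval_AND[OF t h])
        thus "fval p ?s (AND (Tn n) (tr H)) = b2r (x = n \<and> hb (\<lambda>x. x < p) (\<lambda>z. n) H)"
          by (cases "x = n") (auto simp: b2r_def)
      qed
    qed
  qed
  also have "(\<exists>v<p. v = 1 \<and> (\<exists>x<p. x = n \<and> hb (\<lambda>x. x < p) (\<lambda>z. n) H)) = (n < p \<and> hb (\<lambda>x. x < p) (\<lambda>z. n) H)"
    using p1 by auto
  finally show ?thesis .
qed

lemma psi_Th:
  assumes H: "afv H \<subseteq> {0}" "okA H" "\<And>\<sigma>. hb (\<lambda>_. True) \<sigma> H = Kp (\<sigma> 0)"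
  shows "Kp n \<Longrightarrow> 0 \<in> Th_Fp (psi n H)"
    and "\<not> Kp n \<Longrightarrow> Th_Fp (psi n H) \<subseteq> {1}"
proof -
  have val: "fval p (\<lambda>_. 0) (psi n H) = b2r (n < p \<and> hb (\<lambda>x. x < p) (\<lambda>z. n) H)" if "prime p" for p
    by (rule psi_sem[OF prime_gt_1_nat[OF that] H(1,2)])
  {
    assume "Kp n"
    hence "hb (\<lambda>_. True) (\<lambda>z. n) H" using H(3) by simp
    from hb_up[OF this] obtain B where B: "\<forall>p\<ge>B. (\<forall>x\<in>afv H. n < p) \<longrightarrow> hb (\<lambda>x. x < p) (\<lambda>z. n) H"
      by blast
    obtain p where p: "prime p" "max B (Suc n) < p" using bigger_prime by blast
    have np: "n < p" "B \<le> p" using p(2) by auto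
    have "hb (\<lambda>x. x < p) (\<lambda>z. n) H" using B np by blast
    hence f0: "fval p (\<lambda>_. 0) (psi n H) = 0" using val[OF p(1)] np by (simp add: b2r_def)
    have "0 \<in> {fval p (\<lambda>_. 0) (psi n H) | p. prime p}"
      by (rule CollectI, rule exI[of _ p]) (simp add: f0 p(1))
    thus "0 \<in> Th_Fp (psi n H)" unfolding Th_Fp_def by (rule subsetD[OF closure_subset])
  }
  {
    assume nK: "\<not> Kp n"
    have sub: "{fval p (\<lambda>_. 0) (psi n H) | p. prime p} \<subseteq> {1}"
    proof
      fix y assume "y \<in> {fval p (\<lambda>_. 0) (psi n H) | p. prime p}"
      then obtain p where p: "prime p" "y = fval p (\<lambda>_. 0) (psi n H)" by blast
      have "\<not> (n < p \<and> hb (\<lambda>x. x < p) (\<lambda>z. n) H)"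
      proof
        assume a: "n < p \<and> hb (\<lambda>x. x < p) (\<lambda>z. n) H"
        have "hb (\<lambda>_. True) (\<lambda>z. n) H" by (rule hb_down[of H "\<lambda>z. n" p]) (use a in auto)
        thus False using nK H(3) by simp
      qed
      thus "y \<in> {1}" using p(2) val[OF p(1)] by (simp add: b2r_def)
    qed
    show "Th_Fp (psi n H) \<subseteq> {1}" unfolding Th_Fp_def
      by (rule closure_minimal[OF sub]) simp
  }
qed


inductive_cases revZ: "reval Zr xs r"
inductive_cases revS: "reval Sc xs r"
inductive_cases revI: "reval (Id i) xs r"
inductive_cases revC: "reval (Cn g fs) xs r"
inductive_cases revP: "reval (Pr f g) xs r"
inductive_cases revM: "reval (Mn f) xs r"

lemma reval_det: "reval c xs r \<Longrightarrow> reval c xs r' \<Longrightarrow> r = r'"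
proof (induction arbitrary: r' rule: reval.induct)
  case (zero xs) from zero.prems show ?case by (rule revZ) simp
next
  case (succ x) from succ.prems show ?case by (rule revS) simp
next
  case (proj i xs) from proj.prems show ?case by (rule revI) simp
next
  case (comp ys fs xs g r)
  from comp.prems obtain ys' where h: "length ys' = length fs" "\<forall>i<length fs. reval (fs ! i) xs (ys' ! i)" "reval g ys' r'"
    by (rule revC) blast
  have "\<forall>i<length fs. ys ! i = ys' ! i" using h(2) comp.IH(1) by blast
  hence "ys' = ys" using h(1) comp.hyps(1) by (simp add: nth_equalityI)
  thus ?case using comp.IH(2) h(3) by simp
next
  case (prim0 f xs r g)
  from prim0.prems show ?case
  proof (rule revP)
    fix xs' r'' assume "0 # xs = 0 # xs'" "reval f xs' r'" 
    thus ?thesis using prim0.IH by simp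
  next
    fix k xs' r'' assume "0 # xs = Suc k # xs'"
    thus ?thesis by simp
  qed
next
  case (primS f g k xs r1 r)
  from primS.prems show ?case
  proof (rule revP)
    fix xs' assume "Suc k # xs = 0 # xs'"
    thus ?thesis by simp
  next
    fix k' xs' r'' assume h: "Suc k # xs = Suc k' # xs'" "reval (Pr f g) (k' # xs') r''" "reval g (k' # r'' # xs') r'"
    hence "k' = k" "xs' = xs" by auto
    hence "r1 = r''" using primS.IH(1) h(2) by simp
    thus ?thesis using primS.IH(2) h(3) \<open>k' = k\<close> \<open>xs' = xs\<close> by simp
  qed
next
  case (mu f k xs)
  from mu.prems obtain k' where h: "reval f (k' # xs) 0" "\<forall>j<k'. \<exists>r. reval f (j # xs) r \<and> 0 < r" "r' = k'"
    by (rule revM) blast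
  have "\<not> k' < k"
  proof
    assume "k' < k"
    then obtain r where "reval f (k' # xs) r" "0 < r" "\<forall>r''. reval f (k' # xs) r'' \<longrightarrow> r = r''" using mu.IH(2) by blast
    thus False using h(1) by auto
  qed
  moreover have "\<not> k < k'"
  proof
    assume "k < k'"
    then obtain r where "reval f (k # xs) r" "0 < r" using h(2) by blast
    thus False using mu.IH(1) by auto
  qed
  ultimately show ?case using h(3) by simp
qed

definition rfn :: "nat \<Rightarrow> (nat list \<Rightarrow> nat) \<Rightarrow> bool" where
  "rfn n F \<longleftrightarrow> (\<exists>c. \<forall>xs. length xs = n \<longrightarrow> reval c xs (F xs))"

lemma rfn_cong: "rfn n F \<Longrightarrow> (\<And>xs. length xs = n \<Longrightarrow> F xs = G xs) \<Longrightarrow> rfn n G"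
  unfolding rfn_def by metis

lemma rfn_cong': "rfn n F \<Longrightarrow> n = m \<Longrightarrow> (\<And>xs. length xs = m \<Longrightarrow> F xs = G xs) \<Longrightarrow> rfn m G"
  unfolding rfn_def by metis

primrec cst :: "nat \<Rightarrow> recf" where
  "cst 0 = Zr"
| "cst (Suc k) = Cn Sc [cst k]"

lemma reval_cst: "reval (cst k) xs k"
proof (induction k)
  case 0 show ?case by (simp add: reval.zero)
next
  case (Suc k)
  show ?case by (simp, rule reval.comp[of "[k]"]) (use Suc in \<open>auto intro: reval.succ\<close>)
qed

lemma rfn_const: "rfn n (\<lambda>_. k)"
  unfolding rfn_def using reval_cst by blast

lemma rfn_proj: "i < n \<Longrightarrow> rfn n (\<lambda>xs. xs ! i)"
  unfolding rfn_def by (auto intro!: exI[of _ "Id i"] reval.proj)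

lemma rfn_succ: "rfn 1 (\<lambda>xs. Suc (xs ! 0))"
  unfolding rfn_def
proof (intro exI[of _ Sc] allI impI)
  fix xs :: "nat list" assume "length xs = 1"
  then obtain x where "xs = [x]" by (metis One_nat_def length_0_conv length_Suc_conv)
  thus "reval Sc xs (Suc (xs ! 0))" by (simp add: reval.succ)
qed

lemma rfn_comp:
  assumes "rfn (length Fs) G" "\<forall>F\<in>set Fs. rfn n F"
  shows "rfn n (\<lambda>xs. G (map (\<lambda>F. F xs) Fs))"
proof -
  obtain g where g: "\<forall>ys. length ys = length Fs \<longrightarrow> reval g ys (G ys)" using assms(1) unfolding rfn_def by blast
  have "\<forall>F\<in>set Fs. \<exists>c. \<forall>xs. length xs = n \<longrightarrow> reval c xs (F xs)" using assms(2) unfolding rfn_def by blast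
  then obtain cf where cf: "\<forall>F\<in>set Fs. \<forall>xs. length xs = n \<longrightarrow> reval (cf F) xs (F xs)" by metis
  show ?thesis unfolding rfn_def
  proof (intro exI[of _ "Cn g (map cf Fs)"] allI impI)
    fix xs :: "nat list" assume xs: "length xs = n"
    show "reval (Cn g (map cf Fs)) xs (G (map (\<lambda>F. F xs) Fs))"
    proof (rule reval.comp[of "map (\<lambda>F. F xs) Fs"])
      show "length (map (\<lambda>F. F xs) Fs) = length (map cf Fs)" by simp
      show "\<forall>i<length (map cf Fs). reval (map cf Fs ! i) xs (map (\<lambda>F. F xs) Fs ! i)"
        using cf xs by simp
      show "reval g (map (\<lambda>F. F xs) Fs) (G (map (\<lambda>F. F xs) Fs))" using g by simp
    qed
  qed
qed

lemma rfn_pr: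
  assumes "rfn n F" "rfn (Suc (Suc n)) G"
  shows "rfn (Suc n) (\<lambda>xs. rec_nat (F (tl xs)) (\<lambda>k r. G (k # r # tl xs)) (hd xs))"
proof -
  obtain cf where cf: "\<forall>xs. length xs = n \<longrightarrow> reval cf xs (F xs)" using assms(1) unfolding rfn_def by blast
  obtain cg where cg: "\<forall>xs. length xs = Suc (Suc n) \<longrightarrow> reval cg xs (G xs)" using assms(2) unfolding rfn_def by blast
  have main: "length xs = n \<Longrightarrow> reval (Pr cf cg) (k # xs) (rec_nat (F xs) (\<lambda>k r. G (k # r # xs)) k)" for k xs
  proof (induction k)
    case 0 thus ?case using cf by (simp add: reval.prim0)
  next
    case (Suc k)
    thus ?case using cg by (auto intro: reval.primS)
  qed
  show ?thesis unfolding rfn_def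
  proof (intro exI[of _ "Pr cf cg"] allI impI)
    fix xs :: "nat list" assume "length xs = Suc n"
    then obtain k ys where "xs = k # ys" "length ys = n" by (metis length_Suc_conv)
    thus "reval (Pr cf cg) xs (rec_nat (F (tl xs)) (\<lambda>k r. G (k # r # tl xs)) (hd xs))" using main by simp
  qed
qed

definition c1 :: "(nat \<Rightarrow> nat) \<Rightarrow> bool" where "c1 f \<longleftrightarrow> rfn 1 (\<lambda>xs. f (xs ! 0))"
definition c2 :: "(nat \<Rightarrow> nat \<Rightarrow> nat) \<Rightarrow> bool" where "c2 f \<longleftrightarrow> rfn 2 (\<lambda>xs. f (xs ! 0) (xs ! 1))"
definition c3 :: "(nat \<Rightarrow> nat \<Rightarrow> nat \<Rightarrow> nat) \<Rightarrow> bool" where "c3 f \<longleftrightarrow> rfn 3 (\<lambda>xs. f (xs ! 0) (xs ! 1) (xs ! 2))"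

lemma c1_const: "c1 (\<lambda>_. k)" unfolding c1_def by (rule rfn_const)
lemma c2_const: "c2 (\<lambda>_ _. k)" unfolding c2_def by (rule rfn_const)
lemma c3_const: "c3 (\<lambda>_ _ _. k)" unfolding c3_def by (rule rfn_const)
lemma c1_id: "c1 (\<lambda>x. x)" unfolding c1_def by (rule rfn_proj) simp
lemma c1_suc: "c1 Suc" unfolding c1_def by (rule rfn_succ)
lemma c2_p1: "c2 (\<lambda>x y. x)" unfolding c2_def by (rule rfn_proj) simp
lemma c2_p2: "c2 (\<lambda>x y. y)" unfolding c2_def by (rule rfn_proj) simp
lemma c3_p1: "c3 (\<lambda>x y z. x)" unfolding c3_def by (rule rfn_proj) simp
lemma c3_p2: "c3 (\<lambda>x y z. y)" unfolding c3_def by (rule rfn_proj) simp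
lemma c3_p3: "c3 (\<lambda>x y z. z)" unfolding c3_def by (rule rfn_proj) simp

lemma rfn_comp1: "rfn 1 G \<Longrightarrow> rfn n F \<Longrightarrow> rfn n (\<lambda>xs. G [F xs])"
  using rfn_comp[where G=G and Fs="[F]" and n=n] by simp
lemma rfn_comp2: "rfn 2 G \<Longrightarrow> rfn n F1 \<Longrightarrow> rfn n F2 \<Longrightarrow> rfn n (\<lambda>xs. G [F1 xs, F2 xs])"
  using rfn_comp[where G=G and Fs="[F1, F2]" and n=n] by (simp add: numeral_2_eq_2)
lemma rfn_comp3: "rfn 3 G \<Longrightarrow> rfn n F1 \<Longrightarrow> rfn n F2 \<Longrightarrow> rfn n F3 \<Longrightarrow> rfn n (\<lambda>xs. G [F1 xs, F2 xs, F3 xs])"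
  using rfn_comp[where G=G and Fs="[F1, F2, F3]" and n=n] by (simp add: numeral_3_eq_3)

lemma c1_comp1: "c1 g \<Longrightarrow> c1 f \<Longrightarrow> c1 (\<lambda>x. g (f x))"
  unfolding c1_def by (drule rfn_comp1) auto
lemma c1_comp2: "c2 g \<Longrightarrow> c1 f1 \<Longrightarrow> c1 f2 \<Longrightarrow> c1 (\<lambda>x. g (f1 x) (f2 x))"
  unfolding c1_def c2_def by (drule rfn_comp2) auto
lemma c1_comp3: "c3 g \<Longrightarrow> c1 f1 \<Longrightarrow> c1 f2 \<Longrightarrow> c1 f3 \<Longrightarrow> c1 (\<lambda>x. g (f1 x) (f2 x) (f3 x))"
  unfolding c1_def c3_def by (drule rfn_comp3) auto
lemma c2_comp1: "c1 g \<Longrightarrow> c2 f \<Longrightarrow> c2 (\<lambda>x y. g (f x y))"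
  unfolding c1_def c2_def by (drule rfn_comp1) auto
lemma c2_comp2: "c2 g \<Longrightarrow> c2 f1 \<Longrightarrow> c2 f2 \<Longrightarrow> c2 (\<lambda>x y. g (f1 x y) (f2 x y))"
  unfolding c2_def by (drule rfn_comp2) auto
lemma c2_comp3: "c3 g \<Longrightarrow> c2 f1 \<Longrightarrow> c2 f2 \<Longrightarrow> c2 f3 \<Longrightarrow> c2 (\<lambda>x y. g (f1 x y) (f2 x y) (f3 x y))"
  unfolding c2_def c3_def by (drule rfn_comp3) auto
lemma c3_comp1: "c1 g \<Longrightarrow> c3 f \<Longrightarrow> c3 (\<lambda>x y z. g (f x y z))"
  unfolding c1_def c3_def by (drule rfn_comp1) auto
lemma c3_comp2: "c2 g \<Longrightarrow> c3 f1 \<Longrightarrow> c3 f2 \<Longrightarrow> c3 (\<lambda>x y z. g (f1 x y z) (f2 x y z))"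
  unfolding c2_def c3_def by (drule rfn_comp2) auto
lemma c3_comp3: "c3 g \<Longrightarrow> c3 f1 \<Longrightarrow> c3 f2 \<Longrightarrow> c3 f3 \<Longrightarrow> c3 (\<lambda>x y z. g (f1 x y z) (f2 x y z) (f3 x y z))"
  unfolding c3_def by (drule rfn_comp3) auto

lemma c1_rec: "c2 g \<Longrightarrow> c1 (\<lambda>n. rec_nat a (\<lambda>k r. g k r) n)"
proof -
  assume "c2 g"
  hence "rfn (Suc (Suc 0)) (\<lambda>xs. g (xs ! 0) (xs ! 1))" unfolding c2_def by (simp add: numeral_2_eq_2)
  from rfn_pr[OF rfn_const[of 0 a] this] show ?thesis unfolding c1_def
    by (rule rfn_cong') (auto simp: length_Suc_conv)
qed

lemma c2_rec: "c1 a \<Longrightarrow> c3 g \<Longrightarrow> c2 (\<lambda>n y. rec_nat (a y) (\<lambda>k r. g k r y) n)"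
proof -
  assume "c1 a" "c3 g"
  hence "rfn 1 (\<lambda>xs. a (xs ! 0))" "rfn (Suc (Suc 1)) (\<lambda>xs. g (xs ! 0) (xs ! 1) (xs ! 2))"
    unfolding c1_def c3_def by (simp_all add: numeral_3_eq_3)
  from rfn_pr[OF this] show ?thesis unfolding c2_def
    by (rule rfn_cong') (auto simp: length_Suc_conv numeral_2_eq_2)
qed

lemma c3_cond: "c3 (\<lambda>c a b. if c = 0 then b else a)"
proof -
  have "rfn 2 (\<lambda>xs. xs ! 1)" by (rule rfn_proj) simp
  moreover have "rfn (Suc (Suc 2)) (\<lambda>xs. xs ! 2)" by (rule rfn_proj) simp
  ultimately have "rfn (Suc 2) (\<lambda>xs. rec_nat (tl xs ! 1) (\<lambda>k r. (k # r # tl xs) ! 2) (hd xs))"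
    by (rule rfn_pr)
  thus ?thesis unfolding c3_def
    by (rule rfn_cong') (auto simp: length_Suc_conv numeral_3_eq_3 numeral_2_eq_2 gr0_conv_Suc)
qed


lemma c1_eq: "c1 f \<Longrightarrow> (\<And>x. f x = g x) \<Longrightarrow> c1 g"
proof - assume "c1 f" "\<And>x. f x = g x" hence "f = g" by (intro ext) thus "c1 g" using \<open>c1 f\<close> by simp qed
lemma c2_eq: "c2 f \<Longrightarrow> (\<And>x y. f x y = g x y) \<Longrightarrow> c2 g"
proof - assume "c2 f" "\<And>x y. f x y = g x y" hence "f = g" by (intro ext) thus "c2 g" using \<open>c2 f\<close> by simp qed

lemma c2_add: "c2 (\<lambda>x y. x + y)"
proof (rule c2_eq[OF c2_rec[OF c1_id c3_comp1[OF c1_suc c3_p2]]])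
  fix x y show "rec_nat y (\<lambda>k r. Suc r) x = x + y" by (induction x) auto
qed

lemma c1_pred: "c1 (\<lambda>x. x - 1)"
proof (rule c1_eq[OF c1_rec[OF c2_p1]])
  fix x show "rec_nat 0 (\<lambda>k r. k) x = x - 1" by (cases x) auto
qed

lemma c2_monus: "c2 (\<lambda>x y. x - y)"
proof -
  have "c2 (\<lambda>n y. rec_nat y (\<lambda>k r. r - 1) n)" by (rule c2_rec[OF c1_id c3_comp1[OF c1_pred c3_p2]])
  moreover have "rec_nat y (\<lambda>k r. r - 1) n = y - n" for n y by (induction n) auto
  ultimately have "c2 (\<lambda>n y. y - n)" by simp
  from c2_comp2[OF this c2_p2 c2_p1] show ?thesis by simp
qed

lemma c1_tri: "c1 triangle"
proof -
  have "c2 (\<lambda>k r. r + Suc k)" by (rule c2_comp2[OF c2_add c2_p2 c2_comp1[OF c1_suc c2_p1]])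
  from c1_rec[OF this, of 0] show ?thesis
  proof (rule c1_eq)
    fix x show "rec_nat 0 (\<lambda>k r. r + Suc k) x = triangle x" by (induction x) auto
  qed
qed

lemma c2_pe: "c2 (\<lambda>a b. prod_encode (a, b))"
  using c2_comp2[OF c2_add c2_comp1[OF c1_tri c2_add] c2_p1] by (simp add: prod_encode_def)

definition le01 :: "nat \<Rightarrow> nat \<Rightarrow> nat" where "le01 x y = (if x \<le> y then 1 else 0)"

lemma c2_le01: "c2 le01"
proof (rule c2_eq[OF c2_comp2[OF c2_monus c2_const c2_monus]])
  fix x y show "1 - (x - y) = le01 x y" unfolding le01_def by auto
qed

definition rt :: "nat \<Rightarrow> nat" where
  "rt m = rec_nat 0 (\<lambda>k r. if le01 (triangle (Suc r)) (Suc k) = 0 then r else Suc r) m"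

lemma c1_rt: "c1 rt"
proof -
  have "c2 (\<lambda>k r. if le01 (triangle (Suc r)) (Suc k) = 0 then r else Suc r)"
    by (rule c2_comp3[OF c3_cond c2_comp2[OF c2_le01 c2_comp1[OF c1_tri c2_comp1[OF c1_suc c2_p2]] c2_comp1[OF c1_suc c2_p1]]
          c2_comp1[OF c1_suc c2_p2] c2_p2])
  from c1_rec[OF this, of 0] show ?thesis unfolding rt_def .
qed

lemma rt_prop: "triangle (rt m) \<le> m \<and> m < triangle (Suc (rt m))"
proof (induction m)
  case 0 show ?case by (simp add: rt_def)
next
  case (Suc m)
  have e: "rt (Suc m) = (if triangle (Suc (rt m)) \<le> Suc m then Suc (rt m) else rt m)"
    by (simp add: rt_def le01_def)
  show ?case using Suc by (auto simp: e)
qed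

lemma prod_decode_rt: "prod_decode m = (m - triangle (rt m), rt m - (m - triangle (rt m)))"
proof -
  let ?s = "rt m" let ?a = "m - triangle ?s"
  have "?a \<le> ?s" using rt_prop[of m] by (simp add: less_Suc_eq_le) linarith
  hence "prod_encode (?a, ?s - ?a) = m" unfolding prod_encode_def using rt_prop[of m] by simp
  thus ?thesis by (metis prod_encode_inverse)
qed

lemma c1_pd1: "c1 (\<lambda>m. fst (prod_decode m))"
  using c1_comp2[OF c2_monus c1_id c1_comp1[OF c1_tri c1_rt]] by (simp add: prod_decode_rt)
lemma c1_pd2: "c1 (\<lambda>m. snd (prod_decode m))"
  using c1_comp2[OF c2_monus c1_rt c1_comp2[OF c2_monus c1_id c1_comp1[OF c1_tri c1_rt]]] by (simp add: prod_decode_rt)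

definition lhd :: "nat \<Rightarrow> nat" where "lhd l = fst (prod_decode (l - 1))"
definition ltl :: "nat \<Rightarrow> nat" where "ltl l = snd (prod_decode (l - 1))"

lemma c1_lhd: "c1 lhd" unfolding lhd_def by (rule c1_comp1[OF c1_pd1 c1_pred])
lemma c1_ltl: "c1 ltl" unfolding ltl_def by (rule c1_comp1[OF c1_pd2 c1_pred])

definition st :: "nat \<Rightarrow> nat \<Rightarrow> nat" where "st k o' = rec_nat o' (\<lambda>k' r. ltl r) k"
lemma c2_st: "c2 st" unfolding st_def by (rule c2_rec[OF c1_id c3_comp1[OF c1_ltl c3_p2]])

definition gd :: "nat \<Rightarrow> nat" where
  "gd l = (if l = 0 then 0 else le01 (fst (prod_decode (lhd l)) + fst (prod_decode (lhd l))) (snd (prod_decode (lhd l))))"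
lemma c1_gd: "c1 gd"
  unfolding gd_def
  by (rule c1_comp3[OF c3_cond c1_id c1_comp2[OF c2_le01 c1_comp2[OF c2_add c1_comp1[OF c1_pd1 c1_lhd] c1_comp1[OF c1_pd1 c1_lhd]]
         c1_comp1[OF c1_pd2 c1_lhd]] c1_const])

definition acc :: "nat \<Rightarrow> nat \<Rightarrow> nat" where
  "acc k o' = rec_nat 0 (\<lambda>k' r. if r = 0 then gd (st k' o') else 1) k"
lemma c2_acc: "c2 acc"
  unfolding acc_def
  by (rule c2_rec[OF c1_const c3_comp3[OF c3_cond c3_p2 c3_const c3_comp1[OF c1_gd c3_comp2[OF c2_st c3_p1 c3_p3]]]])

definition test :: "nat \<Rightarrow> nat" where "test o' = acc o' o'"
lemma c1_test: "c1 test" unfolding test_def by (rule c1_comp2[OF c2_acc c1_id c1_id])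

definition goodP :: "nat \<Rightarrow> bool" where
  "goodP c \<longleftrightarrow> 2 * fst (prod_decode c) \<le> snd (prod_decode c)"

lemma list_decode_pos: "l \<noteq> 0 \<Longrightarrow> list_decode l = lhd l # list_decode (ltl l)"
  unfolding lhd_def ltl_def by (cases l) (auto split: prod.split)

lemma list_decode_zero_iff: "list_decode l = [] \<longleftrightarrow> l = 0"
  using list_decode_pos[of l] by (cases "l = 0") auto

lemma st_drop: "list_decode (st k o') = drop k (list_decode o')"
proof (induction k)
  case 0 show ?case by (simp add: st_def)
next
  case (Suc k)
  have e: "st (Suc k) o' = ltl (st k o')" by (simp add: st_def)
  show ?case
  proof (cases "st k o' = 0")
    case True
    hence "drop k (list_decode o') = []" using Suc by simp
    moreover have "ltl 0 = 0" unfolding ltl_def by (simp add: prod_decode_def prod_decode_aux.simps)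
    ultimately show ?thesis using True e by (simp add: drop_Suc tl_drop[symmetric])
  next
    case False
    hence "list_decode (st k o') = lhd (st k o') # list_decode (ltl (st k o'))" by (rule list_decode_pos)
    hence "list_decode (ltl (st k o')) = tl (drop k (list_decode o'))" using Suc by simp
    moreover have "drop (Suc k) (list_decode o') = tl (drop k (list_decode o'))" by (simp add: drop_Suc tl_drop)
    ultimately show ?thesis using e by simp
  qed
qed

lemma gd_iff: "gd l = (if l \<noteq> 0 \<and> goodP (hd (list_decode l)) then 1 else 0)"
proof (cases "l = 0")
  case True thus ?thesis by (simp add: gd_def)
next
  case False
  thus ?thesis unfolding gd_def goodP_def le01_def using list_decode_pos[OF False] by auto
qed

lemma acc_iff: "acc k o' = (if \<exists>j<k. j < length (list_decode o') \<and> goodP (list_decode o' ! j) then 1 else 0)"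
proof (induction k)
  case 0 show ?case by (simp add: acc_def)
next
  case (Suc k)
  have e: "acc (Suc k) o' = (if acc k o' = 0 then gd (st k o') else 1)" by (simp add: acc_def)
  have g: "gd (st k o') = (if k < length (list_decode o') \<and> goodP (list_decode o' ! k) then 1 else 0)"
  proof -
    have "st k o' \<noteq> 0 \<longleftrightarrow> k < length (list_decode o')"
      using st_drop[of k o'] list_decode_zero_iff[of "st k o'"] by auto
    moreover have "k < length (list_decode o') \<Longrightarrow> hd (list_decode (st k o')) = list_decode o' ! k"
      using st_drop[of k o'] by (simp add: hd_drop_conv_nth)
    ultimately show ?thesis unfolding gd_iff by auto
  qed
  show ?case unfolding e g Suc by (auto simp: less_Suc_eq)
qed

lemma length_list_decode_le: "length (list_decode n) \<le> n"
proof (induction n rule: less_induct)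
  case (less n)
  show ?case
  proof (cases n)
    case 0 thus ?thesis by simp
  next
    case (Suc m)
    obtain x y where xy: "prod_decode m = (x, y)" by (cases "prod_decode m")
    have "prod_encode (x, y) = m" using xy by (metis prod_decode_inverse)
    hence "y \<le> m" using le_prod_encode_2[of y x] by simp
    hence "length (list_decode y) \<le> y" using less Suc by simp
    thus ?thesis using Suc xy \<open>y \<le> m\<close> by simp
  qed
qed

lemma test_iff: "test o' = (if \<exists>c\<in>set (list_decode o'). goodP c then 1 else 0)"
proof -
  have "(\<exists>j<o'. j < length (list_decode o') \<and> goodP (list_decode o' ! j)) = (\<exists>c\<in>set (list_decode o'). goodP c)"
  proof
    assume "\<exists>j<o'. j < length (list_decode o') \<and> goodP (list_decode o' ! j)"
    thus "\<exists>c\<in>set (list_decode o'). goodP c" using nth_mem by blast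
  next
    assume "\<exists>c\<in>set (list_decode o'). goodP c"
    then obtain j where j: "j < length (list_decode o')" "goodP (list_decode o' ! j)" by (auto simp: in_set_conv_nth)
    moreover have "j < o'" using j(1) length_list_decode_le[of o'] by linarith
    ultimately show "\<exists>j<o'. j < length (list_decode o') \<and> goodP (list_decode o' ! j)" by blast
  qed
  thus ?thesis unfolding test_def acc_iff by simp
qed


definition encAND :: "nat \<Rightarrow> nat \<Rightarrow> nat" where
  "encAND u v = prod_encode (2, prod_encode (4, prod_encode (prod_encode (2, u), v)))"

lemma enc_AND: "enc_fm (AND a b) = encAND (enc_fm a) (enc_fm b)"
  by (simp add: AND_def encAND_def)

lemma c2_encAND: "c2 encAND"
proof -
  have a: "c2 (\<lambda>u v. prod_encode (prod_encode (2, u), v))"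
    by (rule c2_comp2[OF c2_pe c2_comp2[OF c2_pe c2_const c2_p1] c2_p2])
  have b: "c2 (\<lambda>u v. prod_encode (4, prod_encode (prod_encode (2, u), v)))"
    by (rule c2_comp2[OF c2_pe c2_const a])
  show ?thesis unfolding encAND_def by (rule c2_comp2[OF c2_pe c2_const b])
qed

lemma c1_pe_const_l: "c1 g \<Longrightarrow> c1 (\<lambda>x. prod_encode (k, g x))"
  by (rule c1_comp2[OF c2_pe c1_const])
lemma c1_encAND_r: "c1 g \<Longrightarrow> c1 (\<lambda>x. encAND k (g x))"
  by (rule c1_comp2[OF c2_encAND c1_const])
lemma c1_encAND_l: "c1 g \<Longrightarrow> c1 (\<lambda>x. encAND (g x) k)"
  by (rule c1_comp2[OF c2_encAND _ c1_const])

definition GT :: "nat \<Rightarrow> nat" where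
  "GT r = prod_encode (6, prod_encode (1, encAND (enc_fm (SUCC 1 0))
     (prod_encode (6, prod_encode (0, encAND (enc_fm (Eq (V 0) (V 1))) r)))))"

lemma c1_GT: "c1 GT"
  unfolding GT_def
  by (intro c1_pe_const_l c1_encAND_r c1_id)

lemma enc_Tn: "enc_fm (Tn n) = rec_nat (enc_fm (Tn 0)) (\<lambda>k r. GT r) n"
  by (induction n) (simp_all add: GT_def enc_AND)

lemma c1_encTn: "c1 (\<lambda>n. enc_fm (Tn n))"
  by (rule c1_eq[OF c1_rec[OF c2_comp1[OF c1_GT c2_p2]]]) (rule enc_Tn[symmetric])

lemma enc_psi: "enc_fm (psi n H) = prod_encode (6, prod_encode (2, encAND (enc_fm ONE)
     (prod_encode (6, prod_encode (0, encAND (enc_fm (Tn n)) (enc_fm (tr H)))))))"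
  by (simp add: psi_def enc_AND)

lemma c1_Q: "c1 (\<lambda>n. prod_encode (enc_fm (psi n H), 2))"
proof -
  have "c1 (\<lambda>n. enc_fm (psi n H))"
    unfolding enc_psi by (intro c1_pe_const_l c1_encAND_r c1_encAND_l c1_encTn)
  thus ?thesis by (rule c1_comp2[OF c2_pe _ c1_const])
qed

lemma computable_c1: "computable f \<Longrightarrow> c1 f"
  unfolding computable_def c1_def rfn_def
proof (elim exE, intro exI allI impI)
  fix c and xs :: "nat list" assume h: "\<forall>x. reval c [x] (f x)" and "length xs = 1"
  then obtain x where "xs = [x]" by (metis One_nat_def length_0_conv length_Suc_conv)
  thus "reval c xs (f (xs ! 0))" using h by simp
qed

lemma out_set_iff: "s \<in> out_set m \<longleftrightarrow> (\<exists>c\<in>set (list_decode m). s = real (fst (prod_decode c)) / real (Suc (snd (prod_decode c))))"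
  unfolding out_set_def set_map by (simp add: split_beta image_iff)

lemma goodP_val: "goodP c \<longleftrightarrow> real (fst (prod_decode c)) / real (Suc (snd (prod_decode c))) < 1 / 2"
proof -
  obtain a b where ab: "prod_decode c = (a, b)" by (cases "prod_decode c")
  have "real a / real (Suc b) < 1 / 2 \<longleftrightarrow> 2 * real a < real (Suc b)" by (simp add: field_simps)
  also have "\<dots> \<longleftrightarrow> 2 * a \<le> b" by linarith
  finally show ?thesis unfolding goodP_def ab by simp
qed

lemma dist_aux: "dist (s::real) 1 \<le> 1 / 3 \<Longrightarrow> s < 1 / 2 \<Longrightarrow> False"
  by (simp add: dist_real_def)

lemma dist_aux0: "dist 0 (s::real) \<le> 1 / 3 \<Longrightarrow> 0 \<le> s \<Longrightarrow> s < 1 / 2"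
  by (simp add: dist_real_def)

lemma reval_diag:
  assumes hc: "\<forall>n. reval hc [n] (h n)"
  shows "(\<exists>r. reval (Cn (Mn (Id 1)) [hc]) [n] r) \<longleftrightarrow> h n = 0"
proof
  assume "\<exists>r. reval (Cn (Mn (Id 1)) [hc]) [n] r"
  then obtain r where "reval (Cn (Mn (Id 1)) [hc]) [n] r" by blast
  then obtain ys where ys: "length ys = 1" "reval hc [n] (ys ! 0)" "reval (Mn (Id 1)) ys r"
    by (rule revC) auto
  have "ys ! 0 = h n" using reval_det[OF ys(2)] hc by blast
  hence "ys = [h n]" using ys(1) by (metis One_nat_def length_0_conv length_Suc_conv nth_Cons_0)
  with ys(3) have "reval (Mn (Id 1)) [h n] r" by simp
  then obtain k where "reval (Id 1) (k # [h n]) 0" by (rule revM) blast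
  thus "h n = 0" by (rule revI) simp
next
  assume h0: "h n = 0"
  have "reval (Mn (Id 1)) [0] 0"
    by (rule reval.mu) (auto intro: reval.proj[of 1 "[0, 0]", simplified])
  moreover have "reval hc [n] 0" using hc h0 by metis
  ultimately have "reval (Cn (Mn (Id 1)) [hc]) [n] 0"
    by (intro reval.comp[of "[0]"]) auto
  thus "\<exists>r. reval (Cn (Mn (Id 1)) [hc]) [n] r" by blast
qed

theorem corollary2p6:
  shows "\<not> decidable_th Th_Fp"
proof
  assume "decidable_th Th_Fp"
  then obtain f where fc: "computable f" and fd: "\<forall>\<psi> k. sentence \<psi> \<longrightarrow>
        (let S = out_set (f (prod_encode (enc_fm \<psi>, k))); \<epsilon> = 1 / real (Suc k) in
          S \<subseteq> {0..1} \<and>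
          (\<forall>v\<in>Th_Fp \<psi>. \<exists>s\<in>S. dist v s \<le> \<epsilon>) \<and>
          (\<forall>s\<in>S. \<exists>v\<in>Th_Fp \<psi>. dist s v \<le> \<epsilon>))"
    unfolding decidable_th_def by blast
  obtain H where H: "okA H" "afv H \<subseteq> {..<1}" "\<And>\<sigma>. hb (\<lambda>_. True) \<sigma> H = Kp (\<sigma> 0)"
    using Kp_sig unfolding sig1_def by blast
  have H0: "afv H \<subseteq> {0}" using H(2) by auto
  define h where "h n = test (f (prod_encode (enc_fm (psi n H), 2)))" for n
  have ch: "c1 h" unfolding h_def
    by (rule c1_comp1[OF c1_test c1_comp1[OF computable_c1[OF fc] c1_Q]])
  have hK: "h n = (if Kp n then 1 else 0)" for n
  proof -
    let ?S = "out_set (f (prod_encode (enc_fm (psi n H), 2)))"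
    have P: "(\<forall>v\<in>Th_Fp (psi n H). \<exists>s\<in>?S. dist v s \<le> 1 / 3) \<and> (\<forall>s\<in>?S. \<exists>v\<in>Th_Fp (psi n H). dist s v \<le> 1 / 3)"
      using fd[rule_format, OF psi_sentence[OF H0], of n 2] by (simp add: Let_def)
    show ?thesis
    proof (cases "Kp n")
      case True
      hence "0 \<in> Th_Fp (psi n H)" using psi_Th(1)[OF H0 H(1) H(3)] by blast
      then obtain s where s: "s \<in> ?S" "dist 0 s \<le> 1 / 3" using P by blast
      then obtain c where c: "c \<in> set (list_decode (f (prod_encode (enc_fm (psi n H), 2))))"
        "s = real (fst (prod_decode c)) / real (Suc (snd (prod_decode c)))" using out_set_iff by blast
      have "0 \<le> s" using c(2) by simp
      hence "s < 1 / 2" using s(2) dist_aux0 by blast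
      hence "goodP c" using c(2) goodP_val by simp
      thus ?thesis using True c(1) unfolding h_def test_iff by auto
    next
      case False
      hence T: "Th_Fp (psi n H) \<subseteq> {1}" using psi_Th(2)[OF H0 H(1) H(3)] by blast
      have "\<not> goodP c" if c: "c \<in> set (list_decode (f (prod_encode (enc_fm (psi n H), 2))))" for c
      proof
        assume g: "goodP c"
        let ?s = "real (fst (prod_decode c)) / real (Suc (snd (prod_decode c)))"
        have "?s \<in> ?S" using out_set_iff c by blast
        then obtain v where "v \<in> Th_Fp (psi n H)" "dist ?s v \<le> 1 / 3" using P by blast
        hence "dist ?s 1 \<le> 1 / 3" using T by auto
        moreover have "?s < 1 / 2" using g goodP_val by simp
        ultimately show False by (rule dist_aux)
      qed
      thus ?thesis using False unfolding h_def test_iff by auto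
    qed
  qed
  obtain hc where hc: "\<forall>n. reval hc [n] (h n)"
    using ch unfolding c1_def rfn_def by (metis One_nat_def length_Cons list.size(3) nth_Cons_0)
  let ?d = "Cn (Mn (Id 1)) [hc]"
  have a: "Kp (code ?d) \<longleftrightarrow> h (code ?d) = 0" using Kp_code reval_diag[OF hc] by blast
  have b: "h (code ?d) = (if Kp (code ?d) then 1 else 0)" by (rule hK)
  show False
  proof (cases "Kp (code ?d)")
    case True
    hence "h (code ?d) = 1" using b by simp
    thus False using a True by simp
  next
    case False
    hence "h (code ?d) = 0" using b by simp
    thus False using a False by simp
  qed
qed

end
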